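(* Each member of $\mathcal{G}_0$ is cycle-extendable.
   Context: A half biwheel is obtained from a path $P$ of even length (possibly a single vertex) with color classes $A,B$, whose ends lie in $A$, by adding a new vertex (the hub) adjacent to every vertex of $A$; the ends of $P$ are the corners (if $P$ is a single vertex the result is $K_2$, either vertex being the hub and the other the unique corner). $\mathcal{G}_0$ (generalized prisms) consists of the graphs obtained as follows: take an odd $k\ge3$ and disjoint half biwheels $H_0,\dots,H_{k-1}$; for each $i$ label either $w_i=x_i$ := the hub and $y_i,z_i$ := the corners (in some order), or $y_i=z_i$ := the hub and $w_i,x_i$ := the corners (in some order); then add the edges $x_iw_{i+1}$ and $y_iz_{i+1}$ for all $0\le i\le k-1$, indices modulo $k$. A matching covered graph (connected, at least two vertices, every edge in a perfect matching) is cycle-extendable if for every even cycle $C$ the graph $G-V(C)$ has a perfect matching. *)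

theory Defs
  imports Main
begin

definition simple_graph :: "'a set \<Rightarrow> 'a set set \<Rightarrow> bool" where
  "simple_graph V E \<longleftrightarrow> finite V \<and>
     (\<forall>e\<in>E. \<exists>u v. e = {u, v} \<and> u \<noteq> v \<and> u \<in> V \<and> v \<in> V)"

definition perfect_matching :: "'a set \<Rightarrow> 'a set set \<Rightarrow> 'a set set \<Rightarrow> bool" where
  "perfect_matching V E M \<longleftrightarrow> M \<subseteq> E \<and> (\<forall>v\<in>V. \<exists>!e. e \<in> M \<and> v \<in> e)"

definition graph_connected :: "'a set \<Rightarrow> 'a set set \<Rightarrow> bool" where
  "graph_connected V E \<longleftrightarrow> (\<forall>u\<in>V. \<forall>v\<in>V. (\<lambda>a b. {a, b} \<in> E)\<^sup>*\<^sup>* u v)"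

definition matching_covered :: "'a set \<Rightarrow> 'a set set \<Rightarrow> bool" where
  "matching_covered V E \<longleftrightarrow> simple_graph V E \<and> graph_connected V E \<and> card V \<ge> 2 \<and>
     (\<forall>e\<in>E. \<exists>M. perfect_matching V E M \<and> e \<in> M)"

definition is_cycle :: "'a set set \<Rightarrow> 'a list \<Rightarrow> bool" where
  "is_cycle E cs \<longleftrightarrow> distinct cs \<and> length cs \<ge> 3 \<and>
     (\<forall>i < length cs. {cs ! i, cs ! ((i + 1) mod length cs)} \<in> E)"

definition del_vertices_edges :: "'a set set \<Rightarrow> 'a set \<Rightarrow> 'a set set" where
  "del_vertices_edges E S = {e \<in> E. e \<inter> S = {}}"

definition cycle_extendable :: "'a set \<Rightarrow> 'a set set \<Rightarrow> bool" where
  "cycle_extendable V E \<longleftrightarrow> matching_covered V E \<and>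
     (\<forall>cs. is_cycle E cs \<and> even (length cs) \<longrightarrow>
        (\<exists>M. perfect_matching (V - set cs) (del_vertices_edges E (set cs)) M))"

text \<open>Half biwheel number i built on the path (i,0),(i,1),...,(i,2m) (even length 2m,
  colour class A = even positions, ends (i,0),(i,2m) are the corners) with hub (i,2m+1).
  For m = 0 this is K2 with unique corner (i,0).\<close>

definition hbw_verts :: "nat \<Rightarrow> nat \<Rightarrow> (nat \<times> nat) set" where
  "hbw_verts i m = {(i, p) | p. p \<le> 2 * m + 1}"

definition hbw_edges :: "nat \<Rightarrow> nat \<Rightarrow> (nat \<times> nat) set set" where
  "hbw_edges i m = {{(i, p), (i, Suc p)} | p. p < 2 * m}
                 \<union> {{(i, 2 * m + 1), (i, 2 * q)} | q. q \<le> m}"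

definition hbw_hub :: "nat \<Rightarrow> nat \<Rightarrow> nat \<times> nat" where
  "hbw_hub i m = (i, 2 * m + 1)"

definition hbw_corner0 :: "nat \<Rightarrow> nat \<times> nat" where
  "hbw_corner0 i = (i, 0)"

definition hbw_corner1 :: "nat \<Rightarrow> nat \<Rightarrow> nat \<times> nat" where
  "hbw_corner1 i m = (i, 2 * m)"

definition first_corner :: "(nat \<Rightarrow> nat) \<Rightarrow> (nat \<Rightarrow> bool) \<Rightarrow> nat \<Rightarrow> nat \<times> nat" where
  "first_corner m ori i = (if ori i then hbw_corner0 i else hbw_corner1 i (m i))"

definition second_corner :: "(nat \<Rightarrow> nat) \<Rightarrow> (nat \<Rightarrow> bool) \<Rightarrow> nat \<Rightarrow> nat \<times> nat" where
  "second_corner m ori i = (if ori i then hbw_corner1 i (m i) else hbw_corner0 i)"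

definition lab_w :: "(nat \<Rightarrow> nat) \<Rightarrow> (nat \<Rightarrow> bool) \<Rightarrow> (nat \<Rightarrow> bool) \<Rightarrow> nat \<Rightarrow> nat \<times> nat" where
  "lab_w m h ori i = (if h i then hbw_hub i (m i) else first_corner m ori i)"

definition lab_x :: "(nat \<Rightarrow> nat) \<Rightarrow> (nat \<Rightarrow> bool) \<Rightarrow> (nat \<Rightarrow> bool) \<Rightarrow> nat \<Rightarrow> nat \<times> nat" where
  "lab_x m h ori i = (if h i then hbw_hub i (m i) else second_corner m ori i)"

definition lab_y :: "(nat \<Rightarrow> nat) \<Rightarrow> (nat \<Rightarrow> bool) \<Rightarrow> (nat \<Rightarrow> bool) \<Rightarrow> nat \<Rightarrow> nat \<times> nat" where
  "lab_y m h ori i = (if h i then first_corner m ori i else hbw_hub i (m i))"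

definition lab_z :: "(nat \<Rightarrow> nat) \<Rightarrow> (nat \<Rightarrow> bool) \<Rightarrow> (nat \<Rightarrow> bool) \<Rightarrow> nat \<Rightarrow> nat \<times> nat" where
  "lab_z m h ori i = (if h i then second_corner m ori i else hbw_hub i (m i))"

definition prism_verts :: "nat \<Rightarrow> (nat \<Rightarrow> nat) \<Rightarrow> (nat \<times> nat) set" where
  "prism_verts k m = (\<Union>i<k. hbw_verts i (m i))"

definition prism_edges ::
  "nat \<Rightarrow> (nat \<Rightarrow> nat) \<Rightarrow> (nat \<Rightarrow> bool) \<Rightarrow> (nat \<Rightarrow> bool) \<Rightarrow> (nat \<times> nat) set set" where
  "prism_edges k m h ori =
     (\<Union>i<k. hbw_edges i (m i))
     \<union> {{lab_x m h ori i, lab_w m h ori ((i + 1) mod k)} | i. i < k}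
     \<union> {{lab_y m h ori i, lab_z m h ori ((i + 1) mod k)} | i. i < k}"

definition in_G0 :: "'a set \<Rightarrow> 'a set set \<Rightarrow> bool" where
  "in_G0 V E \<longleftrightarrow> (\<exists>k m h ori f. odd k \<and> k \<ge> 3 \<and>
       bij_betw f (prism_verts k m) V \<and> E = (\<lambda>e. f ` e) ` prism_edges k m h ori)"

end

theory Submission
  imports Defs
begin


lemma mod_succ: "(j::nat) < n \<Longrightarrow> (j+1) mod n = (if j+1 = n then 0 else j+1)"
  by auto

lemma mod_Succ: "(j::nat) < n \<Longrightarrow> Suc j mod n = (if Suc j = n then 0 else Suc j)"
  by (auto simp: mod_Suc)

lemma Suc_mod_less: "(3::nat) \<le> n \<Longrightarrow> Suc i mod n < n"
  using mod_less_divisor[of n "Suc i"] by linarith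

definition cyc_edges :: "'a list \<Rightarrow> 'a set set" where
  "cyc_edges cs = (\<lambda>i. {cs ! i, cs ! ((i+1) mod length cs)}) ` {..<length cs}"

lemma cyc_edge_inj:
  assumes d: "distinct cs" and n: "length cs \<ge> 3" and i: "i < length cs" and j: "j < length cs"
    and eq: "{cs ! i, cs ! ((i+1) mod length cs)} = {cs ! j, cs ! ((j+1) mod length cs)}"
  shows "i = j"
proof (rule ccontr)
  assume ne: "i \<noteq> j"
  let ?n = "length cs"
  have ci: "cs ! i \<noteq> cs ! j" using d i j ne by (simp add: nth_eq_iff_index_eq)
  hence a: "cs ! i = cs ! (Suc j mod ?n)" and b: "cs ! (Suc i mod ?n) = cs ! j" using eq by (auto simp: doubleton_eq_iff)
  have jl: "Suc j mod ?n < ?n" "Suc i mod ?n < ?n" by (rule Suc_mod_less[OF n])+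
  have A0: "i = Suc j mod ?n" using a nth_eq_iff_index_eq[OF d i jl(1)] by blast
  have B0: "Suc i mod ?n = j" using b nth_eq_iff_index_eq[OF d jl(2) j] by blast
  show False
  proof (cases "Suc j = ?n")
    case True
    hence "i = 0" using A0 by simp
    hence "Suc 0 mod ?n = j" using B0 by simp
    moreover have "Suc 0 mod ?n = Suc 0" using n by simp
    ultimately show False using True n by simp
  next
    case False
    hence "Suc j < ?n" using j by simp
    hence "i = Suc j" using A0 by simp
    hence "Suc (Suc j) mod ?n = j" using B0 by simp
    thus False using n \<open>Suc j < ?n\<close>
      by (cases "Suc (Suc j) = ?n") simp_all
  qed
qed

lemma card_cyc_edges:
  assumes "distinct cs" "length cs \<ge> 3"
  shows "card (cyc_edges cs) = length cs"
  unfolding cyc_edges_def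
  by (subst card_image) (auto intro!: inj_onI cyc_edge_inj[OF assms])

lemma cyc_edges_card2:
  assumes "distinct cs" "length cs \<ge> 3" "e \<in> cyc_edges cs"
  shows "card e = 2"
proof -
  obtain i where i: "i < length cs" and e: "e = {cs ! i, cs ! ((i+1) mod length cs)}"
    using assms(3) unfolding cyc_edges_def by auto
  have "(i+1) mod length cs \<noteq> i"
    using i assms(2) mod_Succ[OF i] by auto
  moreover have "Suc i mod length cs < length cs" by (rule Suc_mod_less[OF assms(2)])
  ultimately have "cs ! i \<noteq> cs ! ((i+1) mod length cs)" using assms(1,2) i by (simp add: nth_eq_iff_index_eq)
  thus ?thesis using e by simp
qed

lemma cyc_edges_sub:
  assumes "e \<in> cyc_edges cs" shows "e \<subseteq> set cs"
proof -
  obtain i where i: "i < length cs" and e: "e = {cs ! i, cs ! ((i+1) mod length cs)}"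
    using assms(1) unfolding cyc_edges_def by auto
  have "Suc i mod length cs < length cs" using i by (intro mod_less_divisor) linarith
  thus ?thesis using e i by auto
qed

lemma cyc_edges_E:
  assumes "is_cycle E cs" shows "cyc_edges cs \<subseteq> E"
  using assms unfolding cyc_edges_def is_cycle_def by auto

lemma cyc_deg:
  assumes d: "distinct cs" and n: "length cs \<ge> 3" and v: "v \<in> set cs"
  shows "card {e \<in> cyc_edges cs. v \<in> e} = 2"
proof -
  let ?n = "length cs"
  let ?ed = "\<lambda>i. {cs ! i, cs ! ((i+1) mod ?n)}"
  obtain i where i: "i < ?n" and vi: "v = cs ! i" using v by (auto simp: in_set_conv_nth)
  define j where "j = (if i = 0 then ?n - 1 else i - 1)"
  have j: "j < ?n" using n i by (auto simp: j_def)
  have ji: "(j+1) mod ?n = i" using i n mod_Succ[OF j] unfolding j_def by (cases "i = 0") auto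
  have ij: "i \<noteq> j" using n i unfolding j_def by auto
  have set: "{e \<in> cyc_edges cs. v \<in> e} = {?ed i, ?ed j}"
  proof
    show "{e \<in> cyc_edges cs. v \<in> e} \<subseteq> {?ed i, ?ed j}"
    proof
      fix e assume "e \<in> {e \<in> cyc_edges cs. v \<in> e}"
      then obtain l where l: "l < ?n" and e: "e = ?ed l" and ve: "v \<in> e" unfolding cyc_edges_def by auto
      have "cs ! l = cs ! i \<or> cs ! ((l+1) mod ?n) = cs ! i" using ve e vi by auto
      moreover have "Suc l mod ?n < ?n" by (rule Suc_mod_less[OF n])
      ultimately have "l = i \<or> Suc l mod ?n = i" using nth_eq_iff_index_eq[OF d l i] nth_eq_iff_index_eq[OF d \<open>Suc l mod ?n < ?n\<close> i] by auto
      moreover have "(l+1) mod ?n = i \<Longrightarrow> l = j"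
      proof -
        assume "(l+1) mod ?n = i"
        hence "(l+1) mod ?n = (j+1) mod ?n" using ji by simp
        hence "Suc l mod ?n = Suc j mod ?n" by simp
        thus "l = j" using mod_Succ[OF l] mod_Succ[OF j] l j by (auto split: if_splits)
      qed
      ultimately show "e \<in> {?ed i, ?ed j}" using e by auto
    qed
  next
    show "{?ed i, ?ed j} \<subseteq> {e \<in> cyc_edges cs. v \<in> e}"
      using i j ji vi unfolding cyc_edges_def by auto
  qed
  have "?ed i \<noteq> ?ed j" using cyc_edge_inj[OF d n i j] ij by blast
  thus ?thesis using set by simp
qed

lemma handshake:
  assumes F: "finite F" and c2: "\<forall>e\<in>F. card e = 2" and X: "finite X"
  shows "(\<Sum>v\<in>X. card {e\<in>F. v\<in>e}) = 2 * card {e\<in>F. e \<subseteq> X} + card {e\<in>F. card (e \<inter> X) = 1}"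
proof -
  have "(\<Sum>v\<in>X. card {e\<in>F. v\<in>e}) = (\<Sum>v\<in>X. \<Sum>e\<in>F. if v \<in> e then 1 else 0)"
  proof (rule sum.cong)
    fix v show "card {e\<in>F. v\<in>e} = (\<Sum>e\<in>F. if v \<in> e then 1 else 0)"
      using sum.inter_filter[OF F, of "\<lambda>_. 1::nat" "\<lambda>e. v\<in>e"] by simp
  qed simp
  also have "\<dots> = (\<Sum>e\<in>F. \<Sum>v\<in>X. if v \<in> e then 1 else 0)" by (rule sum.swap)
  also have "\<dots> = (\<Sum>e\<in>F. card (e \<inter> X))"
  proof (rule sum.cong)
    fix e
    have "(\<Sum>v\<in>X. if v \<in> e then 1 else 0) = card {v\<in>X. v\<in>e}"
      using sum.inter_filter[OF X, of "\<lambda>_. 1::nat" "\<lambda>v. v\<in>e"] by simp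
    also have "{v\<in>X. v\<in>e} = e \<inter> X" by auto
    finally show "(\<Sum>v\<in>X. if v \<in> e then 1 else 0) = card (e \<inter> X)" .
  qed simp
  also have "\<dots> = (\<Sum>e\<in>F. (if e \<subseteq> X then 2 else 0) + (if card (e \<inter> X) = 1 then 1 else 0))"
  proof (rule sum.cong)
    fix e assume e: "e \<in> F"
    have ce: "card e = 2" using c2 e by auto
    have fe: "finite e" using ce card.infinite by fastforce
    have le: "card (e \<inter> X) \<le> 2" using ce fe by (metis card_mono inf_le1)
    show "card (e \<inter> X) = (if e \<subseteq> X then 2 else 0) + (if card (e \<inter> X) = 1 then 1 else 0)"
    proof (cases "e \<subseteq> X")
      case True thus ?thesis using ce by (simp add: Int_absorb2)
    next
      case False
      hence "e \<inter> X \<noteq> e" by auto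
      hence "card (e \<inter> X) < 2" using ce fe by (metis psubsetI inf_le1 psubset_card_mono)
      thus ?thesis using False by auto
    qed
  qed simp
  also have "\<dots> = 2 * card {e\<in>F. e \<subseteq> X} + card {e\<in>F. card (e \<inter> X) = 1}"
    using F sum.inter_filter[OF F, of "\<lambda>_. 2::nat" "\<lambda>e. e \<subseteq> X"]
      sum.inter_filter[OF F, of "\<lambda>_. 1::nat" "\<lambda>e. card (e \<inter> X) = 1"]
    by (simp add: sum.distrib)
  finally show ?thesis .
qed

lemma cyc_crs_even:
  assumes d: "distinct cs" and n: "length cs \<ge> 3" and X: "finite X"
  shows "even (card {e \<in> cyc_edges cs. card (e \<inter> X) = 1})"
proof -
  have F: "finite (cyc_edges cs)" unfolding cyc_edges_def by simp
  have c2: "\<forall>e\<in>cyc_edges cs. card e = 2" using cyc_edges_card2[OF d n] by auto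
  have "(\<Sum>v\<in>X. card {e\<in>cyc_edges cs. v\<in>e}) = (\<Sum>v\<in>X. if v \<in> set cs then 2 else 0)"
  proof (rule sum.cong)
    fix v assume "v \<in> X"
    show "card {e\<in>cyc_edges cs. v\<in>e} = (if v \<in> set cs then 2 else 0)"
    proof (cases "v \<in> set cs")
      case True thus ?thesis using cyc_deg[OF d n] by simp
    next
      case False
      hence E0: "{e\<in>cyc_edges cs. v\<in>e} = {}" using cyc_edges_sub by blast
      show ?thesis unfolding E0 using False by simp
    qed
  qed simp
  also have "\<dots> = card {v\<in>X. v \<in> set cs} * 2"
    using X sum.inter_filter[OF X, of "\<lambda>_. 2::nat" "\<lambda>v. v \<in> set cs"] by simp
  finally have "even (\<Sum>v\<in>X. card {e\<in>cyc_edges cs. v\<in>e})" by simp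
  thus ?thesis using handshake[OF F c2 X] by simp
qed



lemma pm_transport:
  assumes bij: "bij_betw f PV V" and sub: "\<forall>e\<in>PE. e \<subseteq> PV" and S: "S \<subseteq> PV"
    and pm: "perfect_matching (PV - S) (del_vertices_edges PE S) M"
  shows "perfect_matching (V - f ` S) (del_vertices_edges ((\<lambda>e. f ` e) ` PE) (f ` S)) ((\<lambda>e. f ` e) ` M)"
proof -
  have inj: "inj_on f PV" and im: "f ` PV = V" using bij by (auto simp: bij_betw_def)
  have MPE: "M \<subseteq> PE" and Mdis: "\<forall>e\<in>M. e \<inter> S = {}" using pm unfolding perfect_matching_def del_vertices_edges_def by auto
  have cov: "\<forall>v\<in>PV - S. \<exists>!e. e \<in> M \<and> v \<in> e" using pm unfolding perfect_matching_def by auto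
  have "(\<lambda>e. f ` e) ` M \<subseteq> del_vertices_edges ((\<lambda>e. f ` e) ` PE) (f ` S)"
  proof
    fix e' assume "e' \<in> (\<lambda>e. f ` e) ` M"
    then obtain e where e: "e \<in> M" and e': "e' = f ` e" by auto
    have "e \<subseteq> PV" using e MPE sub by auto
    hence "f ` e \<inter> f ` S = f ` (e \<inter> S)" using inj S by (simp add: inj_on_image_Int)
    thus "e' \<in> del_vertices_edges ((\<lambda>e. f ` e) ` PE) (f ` S)"
      using e e' MPE Mdis unfolding del_vertices_edges_def by auto
  qed
  moreover have "\<forall>v\<in>V - f ` S. \<exists>!e'. e' \<in> (\<lambda>e. f ` e) ` M \<and> v \<in> e'"
  proof
    fix v assume v: "v \<in> V - f ` S"
    then obtain v' where v': "v' \<in> PV" "v = f v'" using im by auto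
    have v'S: "v' \<notin> S" using v v' by auto
    have key: "\<And>e. e \<in> M \<Longrightarrow> (v \<in> f ` e) = (v' \<in> e)"
    proof -
      fix e assume "e \<in> M"
      hence "e \<subseteq> PV" using MPE sub by auto
      thus "(v \<in> f ` e) = (v' \<in> e)" using v' inj by (auto simp: inj_on_image_mem_iff)
    qed
    obtain e where e: "e \<in> M" "v' \<in> e" and uq: "\<And>e2. e2 \<in> M \<and> v' \<in> e2 \<Longrightarrow> e2 = e"
      using cov v' v'S by blast
    show "\<exists>!e'. e' \<in> (\<lambda>e. f ` e) ` M \<and> v \<in> e'"
    proof
      show "f ` e \<in> (\<lambda>e. f ` e) ` M \<and> v \<in> f ` e" using e key by auto
    next
      fix e2' assume "e2' \<in> (\<lambda>e. f ` e) ` M \<and> v \<in> e2'"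
      then obtain e2 where "e2 \<in> M" "e2' = f ` e2" "v \<in> f ` e2" by auto
      thus "e2' = f ` e" using key uq by auto
    qed
  qed
  ultimately show ?thesis unfolding perfect_matching_def by auto
qed

lemma del_empty: "del_vertices_edges E {} = E"
  unfolding del_vertices_edges_def by auto

lemma transport:
  assumes bij: "bij_betw f PV V" and E: "E = (\<lambda>e. f ` e) ` PE" and sub: "\<forall>e\<in>PE. e \<subseteq> PV"
    and ce: "cycle_extendable PV PE"
  shows "cycle_extendable V E"
proof -
  have inj: "inj_on f PV" and im: "f ` PV = V" using bij by (auto simp: bij_betw_def)
  have mc: "matching_covered PV PE" using ce unfolding cycle_extendable_def by auto
  have sg: "simple_graph PV PE" and gc: "graph_connected PV PE" and c2: "card PV \<ge> 2"
    and cov: "\<forall>e\<in>PE. \<exists>M. perfect_matching PV PE M \<and> e \<in> M"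
    using mc unfolding matching_covered_def by auto
  have "simple_graph V E"
    unfolding simple_graph_def
  proof
    show "finite V" using sg im unfolding simple_graph_def by auto
    show "\<forall>e\<in>E. \<exists>u v. e = {u, v} \<and> u \<noteq> v \<and> u \<in> V \<and> v \<in> V"
    proof
      fix e assume "e \<in> E"
      then obtain e' where e': "e' \<in> PE" "e = f ` e'" using E by auto
      then obtain u v where "e' = {u,v}" "u \<noteq> v" "u \<in> PV" "v \<in> PV" using sg unfolding simple_graph_def by blast
      thus "\<exists>u v. e = {u, v} \<and> u \<noteq> v \<and> u \<in> V \<and> v \<in> V"
        using e' inj im by (intro exI[of _ "f u"] exI[of _ "f v"]) (auto simp: inj_on_eq_iff)
    qed
  qed
  moreover have "graph_connected V E"
    unfolding graph_connected_def
  proof (intro ballI)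
    fix u v assume "u \<in> V" "v \<in> V"
    then obtain u' v' where uv: "u' \<in> PV" "v' \<in> PV" "u = f u'" "v = f v'" using im by auto
    have r: "(\<lambda>a b. {a, b} \<in> PE)\<^sup>*\<^sup>* u' v'" using gc uv unfolding graph_connected_def by auto
    have "(\<lambda>a b. {a, b} \<in> E)\<^sup>*\<^sup>* (f u') (f v')"
      using r
    proof (induction rule: rtranclp_induct)
      case base thus ?case by simp
    next
      case (step y z)
      have "f ` {y, z} \<in> (\<lambda>e. f ` e) ` PE" using step(2) by (rule imageI)
      hence "{f y, f z} \<in> E" using E by simp
      thus ?case using step(3) by (simp add: rtranclp.rtrancl_into_rtrancl)
    qed
    thus "(\<lambda>a b. {a, b} \<in> E)\<^sup>*\<^sup>* u v" using uv by simp
  qed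
  moreover have "card V \<ge> 2" using c2 card_image[OF inj] im by simp
  moreover have "\<forall>e\<in>E. \<exists>M. perfect_matching V E M \<and> e \<in> M"
  proof
    fix e assume "e \<in> E"
    then obtain e' where e': "e' \<in> PE" "e = f ` e'" using E by auto
    then obtain M where M: "perfect_matching PV PE M" "e' \<in> M" using cov by blast
    have "perfect_matching (V - f ` {}) (del_vertices_edges ((\<lambda>e. f ` e) ` PE) (f ` {})) ((\<lambda>e. f ` e) ` M)"
      by (rule pm_transport[OF bij sub]) (use M in \<open>auto simp: del_empty\<close>)
    thus "\<exists>M. perfect_matching V E M \<and> e \<in> M" using M e' E by (auto simp: del_empty)
  qed
  moreover have "\<forall>cs. is_cycle E cs \<and> even (length cs) \<longrightarrow>
        (\<exists>M. perfect_matching (V - set cs) (del_vertices_edges E (set cs)) M)"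
  proof (intro allI impI)
    fix cs assume a: "is_cycle E cs \<and> even (length cs)"
    let ?n = "length cs"
    let ?g = "inv_into PV f"
    have d: "distinct cs" and n3: "?n \<ge> 3" and ed: "\<forall>i<?n. {cs ! i, cs ! ((i + 1) mod ?n)} \<in> E"
      using a unfolding is_cycle_def by auto
    have EV: "\<forall>e\<in>E. e \<subseteq> V" using E sub im by auto
    have csV: "set cs \<subseteq> V"
    proof
      fix x assume "x \<in> set cs"
      then obtain i where "i < ?n" "x = cs ! i" by (auto simp: in_set_conv_nth)
      thus "x \<in> V" using ed EV by blast
    qed
    define cs' where "cs' = map ?g cs"
    have injg: "inj_on ?g V" by (rule inj_on_inv_into) (simp add: im)
    have gPV: "?g ` V \<subseteq> PV" using im by (auto intro: inv_into_into)
    have fg: "\<And>x. x \<in> V \<Longrightarrow> f (?g x) = x" using im by (auto intro: f_inv_into_f)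
    have cyc': "is_cycle PE cs'"
      unfolding is_cycle_def
    proof (intro conjI allI impI)
      show "distinct cs'" unfolding cs'_def using d injg csV by (simp add: distinct_map inj_on_subset)
      show "length cs' \<ge> 3" using n3 unfolding cs'_def by simp
      fix i assume i: "i < length cs'"
      hence i': "i < ?n" unfolding cs'_def by simp
      have j': "(i+1) mod ?n < ?n" using n3 by (intro mod_less_divisor) linarith
      obtain e' where e': "e' \<in> PE" "{cs ! i, cs ! ((i + 1) mod ?n)} = f ` e'" using ed i' E by auto
      have "e' \<subseteq> PV" using e' sub by auto
      hence "?g ` {cs ! i, cs ! ((i + 1) mod ?n)} = e'"
        unfolding e'(2) by (rule inv_into_image_cancel[OF inj])
      thus "{cs' ! i, cs' ! ((i + 1) mod length cs')} \<in> PE"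
        using e' i' j' unfolding cs'_def by simp
    qed
    have len: "length cs' = ?n" unfolding cs'_def by simp
    have S': "set cs' \<subseteq> PV" unfolding cs'_def using csV gPV by auto
    have fS: "f ` set cs' = set cs"
    proof -
      have "f ` set cs' = (\<lambda>x. f (?g x)) ` set cs" unfolding cs'_def by (simp add: image_image)
      also have "\<dots> = (\<lambda>x. x) ` set cs" using csV fg by (intro image_cong) auto
      finally show ?thesis by simp
    qed
    obtain M' where M': "perfect_matching (PV - set cs') (del_vertices_edges PE (set cs')) M'"
      using ce cyc' a len unfolding cycle_extendable_def by auto
    have "perfect_matching (V - f ` set cs') (del_vertices_edges ((\<lambda>e. f ` e) ` PE) (f ` set cs')) ((\<lambda>e. f ` e) ` M')"
      by (rule pm_transport[OF bij sub S' M'])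
    thus "\<exists>M. perfect_matching (V - set cs) (del_vertices_edges E (set cs)) M" using fS E by auto
  qed
  ultimately show ?thesis unfolding cycle_extendable_def matching_covered_def by auto
qed



lemma lab_simps:
  "lab_x m h ori c = (if h c then (c, 2*m c+1) else if ori c then (c, 2*m c) else (c, 0))"
  "lab_w m h ori c = (if h c then (c, 2*m c+1) else if ori c then (c, 0) else (c, 2*m c))"
  "lab_y m h ori c = (if h c then (if ori c then (c,0) else (c,2*m c)) else (c, 2*m c+1))"
  "lab_z m h ori c = (if h c then (if ori c then (c,2*m c) else (c,0)) else (c, 2*m c+1))"
  by (simp_all add: lab_x_def lab_w_def lab_y_def lab_z_def first_corner_def second_corner_def
      hbw_hub_def hbw_corner0_def hbw_corner1_def)

lemma fst_lab[simp]:
  "fst (lab_x m h ori c) = c" "fst (lab_w m h ori c) = c" "fst (lab_y m h ori c) = c" "fst (lab_z m h ori c) = c"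
  by (simp_all add: lab_simps)

locale prism =
  fixes k :: nat and m :: "nat \<Rightarrow> nat" and h ori :: "nat \<Rightarrow> bool"
  assumes k3: "k \<ge> 3"
begin

abbreviation "PV \<equiv> prism_verts k m"
abbreviation "PE \<equiv> prism_edges k m h ori"

definition hub :: "nat \<Rightarrow> nat \<times> nat" where "hub j = (j, 2 * m j + 1)"
definition nx :: "nat \<Rightarrow> nat" where "nx c = Suc c mod k"
definition ecut :: "nat \<Rightarrow> (nat \<times> nat) set" where
  "ecut c = {lab_x m h ori c, lab_w m h ori (nx c)}"
definition fcut :: "nat \<Rightarrow> (nat \<times> nat) set" where
  "fcut c = {lab_y m h ori c, lab_z m h ori (nx c)}"

lemma nx_less: "nx c < k" using k3 unfolding nx_def by simp
lemma nx_ne: "c < k \<Longrightarrow> nx c \<noteq> c"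
  using k3 unfolding nx_def by (cases "Suc c = k") auto

lemma PV_iff: "v \<in> PV \<longleftrightarrow> fst v < k \<and> snd v \<le> 2 * m (fst v) + 1"
  unfolding prism_verts_def hbw_verts_def by (cases v) auto

lemma hbw_edges_iff: "e \<in> hbw_edges j n \<longleftrightarrow>
   (\<exists>p < 2 * n. e = {(j,p), (j, Suc p)}) \<or> (\<exists>q \<le> n. e = {(j, 2*n+1), (j, 2*q)})"
  unfolding hbw_edges_def by auto

lemma PE_iff: "e \<in> PE \<longleftrightarrow> (\<exists>j<k. e \<in> hbw_edges j (m j)) \<or> (\<exists>c<k. e = ecut c \<or> e = fcut c)"
  unfolding prism_edges_def ecut_def fcut_def nx_def by auto

end



context prism
begin

lemma nx_inj: "c1 < k \<Longrightarrow> c2 < k \<Longrightarrow> nx c1 = nx c2 \<Longrightarrow> c1 = c2"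
proof -
  assume c: "c1 < k" "c2 < k" "nx c1 = nx c2"
  have "(if Suc c1 = k then 0 else Suc c1) = (if Suc c2 = k then 0 else Suc c2)"
    using c(3) mod_Succ[OF c(1)] mod_Succ[OF c(2)] unfolding nx_def by simp
  thus ?thesis using c(1,2) by (cases "Suc c1 = k"; cases "Suc c2 = k") simp_all
qed

lemma nx_nx: "c1 < k \<Longrightarrow> c2 < k \<Longrightarrow> nx c1 = c2 \<Longrightarrow> nx c2 = c1 \<Longrightarrow> False"
proof -
  assume c: "c1 < k" "c2 < k" "nx c1 = c2" "nx c2 = c1"
  have A: "c2 = (if Suc c1 = k then 0 else Suc c1)" using c(3) mod_Succ[OF c(1)] unfolding nx_def by simp
  have B: "c1 = (if Suc c2 = k then 0 else Suc c2)" using c(4) mod_Succ[OF c(2)] unfolding nx_def by simp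
  have A': "(Suc c1 = k \<and> c2 = 0) \<or> (Suc c1 \<noteq> k \<and> c2 = Suc c1)" using A by (cases "Suc c1 = k") simp_all
  have B': "(Suc c2 = k \<and> c1 = 0) \<or> (Suc c2 \<noteq> k \<and> c1 = Suc c2)" using B by (cases "Suc c2 = k") simp_all
  show False using A' B' k3 by presburger
qed

definition pv :: "nat \<Rightarrow> nat" where "pv j = (if j = 0 then k - 1 else j - 1)"

lemma pv_less: "j < k \<Longrightarrow> pv j < k" unfolding pv_def using k3 by auto

lemma nx_pv: "j < k \<Longrightarrow> nx (pv j) = j"
proof (cases j)
  case 0 thus ?thesis unfolding pv_def nx_def using k3 by simp
next
  case (Suc j') assume "j < k" thus ?thesis unfolding pv_def nx_def using Suc by simp
qed

lemma nx_eq_iff: "c < k \<Longrightarrow> j < k \<Longrightarrow> nx c = j \<longleftrightarrow> c = pv j"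
proof
  assume c: "c < k" "j < k" "nx c = j"
  hence "nx c = nx (pv j)" using nx_pv by simp
  thus "c = pv j" using nx_inj[OF c(1) pv_less[OF c(2)]] by simp
next
  assume "c < k" "j < k" "c = pv j" thus "nx c = j" using nx_pv by simp
qed

lemma pv_ne: "j < k \<Longrightarrow> pv j \<noteq> j"
proof
  assume j: "j < k" "pv j = j"
  hence "nx j = j" using nx_pv[OF j(1)] by simp
  thus False using nx_ne[OF j(1)] by simp
qed

definition iscut :: "(nat \<times> nat) set \<Rightarrow> bool" where
  "iscut e \<longleftrightarrow> (\<exists>c<k. e = ecut c \<or> e = fcut c)"

lemma lab_in_PV:
  "c < k \<Longrightarrow> lab_x m h ori c \<in> PV" "c < k \<Longrightarrow> lab_w m h ori c \<in> PV"
  "c < k \<Longrightarrow> lab_y m h ori c \<in> PV" "c < k \<Longrightarrow> lab_z m h ori c \<in> PV"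
  by (auto simp: PV_iff lab_simps)

lemma hub_PV: "j < k \<Longrightarrow> hub j \<in> PV" by (simp add: PV_iff hub_def)

lemma ecut_sub: "c < k \<Longrightarrow> ecut c \<subseteq> PV" and fcut_sub: "c < k \<Longrightarrow> fcut c \<subseteq> PV"
  unfolding ecut_def fcut_def using lab_in_PV nx_less by auto

lemma PE_sub: "e \<in> PE \<Longrightarrow> e \<subseteq> PV"
  unfolding PE_iff hbw_edges_iff using ecut_sub fcut_sub by (auto simp: PV_iff)

lemma fst_ecut: "c < k \<Longrightarrow> fst ` ecut c = {c, nx c}" and fst_fcut: "c < k \<Longrightarrow> fst ` fcut c = {c, nx c}"
  unfolding ecut_def fcut_def by auto

lemma ecut_ne_fcut: "c < k \<Longrightarrow> ecut c \<noteq> fcut c"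
proof
  assume c: "c < k" and eq: "ecut c = fcut c"
  have "lab_x m h ori c \<in> fcut c" using eq unfolding ecut_def by auto
  moreover have "lab_x m h ori c \<noteq> lab_z m h ori (nx c)"
  proof
    assume "lab_x m h ori c = lab_z m h ori (nx c)"
    hence "fst (lab_x m h ori c) = fst (lab_z m h ori (nx c))" by simp
    thus False using nx_ne[OF c] by simp
  qed
  ultimately have "lab_x m h ori c = lab_y m h ori c" unfolding fcut_def by auto
  thus False by (cases "h c"; cases "ori c") (simp_all add: lab_simps)
qed

lemma cut_eq_cut:
  assumes c1: "c1 < k" and c2: "c2 < k" and e1: "e = ecut c1 \<or> e = fcut c1" and e2: "e = ecut c2 \<or> e = fcut c2"
  shows "c1 = c2"
proof -
  have "fst ` e = {c1, nx c1}" using e1 by (rule disjE) (simp_all add: fst_ecut[OF c1] fst_fcut[OF c1])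
  moreover have "fst ` e = {c2, nx c2}" using e2 by (rule disjE) (simp_all add: fst_ecut[OF c2] fst_fcut[OF c2])
  ultimately have "{c1, nx c1} = {c2, nx c2}" by simp
  hence "c1 = c2 \<or> (c1 = nx c2 \<and> nx c1 = c2)" by (auto simp: doubleton_eq_iff)
  thus ?thesis using nx_nx c1 c2 by blast
qed

lemma iscut_fst: "iscut e \<Longrightarrow> \<exists>u\<in>e. \<exists>v\<in>e. fst u \<noteq> fst v"
proof -
  assume "iscut e"
  then obtain c where c: "c < k" "e = ecut c \<or> e = fcut c" unfolding iscut_def by blast
  have "fst ` e = {c, nx c}" using c(2) by (rule disjE) (simp_all add: fst_ecut[OF c(1)] fst_fcut[OF c(1)])
  then obtain u v where "u \<in> e" "v \<in> e" "fst u = c" "fst v = nx c"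
    by (metis imageE insertI1 insertI2 singletonI)
  thus ?thesis using nx_ne[OF c(1)] by metis
qed

lemma internal_fst: "e \<in> hbw_edges j n \<Longrightarrow> u \<in> e \<Longrightarrow> fst u = j"
  unfolding hbw_edges_iff by auto

lemma iscut_not_internal: "iscut e \<Longrightarrow> e \<notin> hbw_edges j n"
proof
  assume "iscut e" "e \<in> hbw_edges j n"
  then obtain u v where "u \<in> e" "v \<in> e" "fst u \<noteq> fst v" using iscut_fst by blast
  thus False using internal_fst[OF \<open>e \<in> hbw_edges j n\<close>] by simp
qed

lemma cut_vertex: "c < k \<Longrightarrow> v \<in> ecut c \<union> fcut c \<Longrightarrow>
   (fst v = c \<or> fst v = nx c) \<and> (snd v = 0 \<or> snd v = 2 * m (fst v) \<or> snd v = 2 * m (fst v) + 1)"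
  using nx_ne[of c] by (cases "h c"; cases "ori c"; cases "h (nx c)"; cases "ori (nx c)")
    (auto simp: ecut_def fcut_def lab_simps hub_def)

lemma cut_hub: "c < k \<Longrightarrow> v \<in> ecut c \<union> fcut c \<Longrightarrow> hub (fst v) \<in> ecut c \<union> fcut c"
  using nx_ne[of c] by (cases "h c"; cases "ori c"; cases "h (nx c)"; cases "ori (nx c)")
    (auto simp: ecut_def fcut_def lab_simps hub_def)

lemma cut_corner: "c < k \<Longrightarrow> v \<in> ecut c \<union> fcut c \<Longrightarrow>
    \<exists>u\<in>ecut c \<union> fcut c. fst u = fst v \<and> snd u \<le> 2 * m (fst v)"
proof -
  assume c: "c < k" and v: "v \<in> ecut c \<union> fcut c"
  have "fst v = c \<or> fst v = nx c" using cut_vertex[OF c v] by simp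
  thus ?thesis
  proof
    assume fv: "fst v = c"
    let ?u = "if h c then lab_y m h ori c else lab_x m h ori c"
    have "?u \<in> ecut c \<union> fcut c" unfolding ecut_def fcut_def by auto
    moreover have "fst ?u = fst v \<and> snd ?u \<le> 2 * m (fst v)" using fv by (auto simp: lab_simps)
    ultimately show ?thesis by blast
  next
    assume fv: "fst v = nx c"
    let ?u = "if h (nx c) then lab_z m h ori (nx c) else lab_w m h ori (nx c)"
    have "?u \<in> ecut c \<union> fcut c" unfolding ecut_def fcut_def by auto
    moreover have "fst ?u = fst v \<and> snd ?u \<le> 2 * m (fst v)" using fv by (auto simp: lab_simps)
    ultimately show ?thesis by blast
  qed
qed

lemma cut_partner_e: "c < k \<Longrightarrow> (j, p) \<in> ecut c \<Longrightarrow> p \<le> 2 * m j \<Longrightarrow> hub j \<in> fcut c"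
  using nx_ne[of c] by (cases "h c"; cases "ori c"; cases "h (nx c)"; cases "ori (nx c)")
    (auto simp: ecut_def fcut_def lab_simps hub_def)

lemma cut_partner_f: "c < k \<Longrightarrow> (j, p) \<in> fcut c \<Longrightarrow> p \<le> 2 * m j \<Longrightarrow> hub j \<in> ecut c"
  using nx_ne[of c] by (cases "h c"; cases "ori c"; cases "h (nx c)"; cases "ori (nx c)")
    (auto simp: ecut_def fcut_def lab_simps hub_def)

end



context prism
begin

lemma in_ecut: "c < k \<Longrightarrow> j < k \<Longrightarrow> (j, p) \<in> ecut c \<longleftrightarrow>
   (c = j \<and> lab_x m h ori j = (j, p)) \<or> (c = pv j \<and> lab_w m h ori j = (j, p))"
proof -
  assume c: "c < k" and j: "j < k"
  have "(j, p) \<in> ecut c \<longleftrightarrow> (j, p) = lab_x m h ori c \<or> (j, p) = lab_w m h ori (nx c)"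
    unfolding ecut_def by auto
  also have "\<dots> \<longleftrightarrow> (c = j \<and> lab_x m h ori j = (j, p)) \<or> (nx c = j \<and> lab_w m h ori j = (j, p))"
    by (metis fst_conv fst_lab(1) fst_lab(2))
  also have "\<dots> \<longleftrightarrow> (c = j \<and> lab_x m h ori j = (j, p)) \<or> (c = pv j \<and> lab_w m h ori j = (j, p))"
    using nx_eq_iff[OF c j] by simp
  finally show ?thesis .
qed

lemma in_fcut: "c < k \<Longrightarrow> j < k \<Longrightarrow> (j, p) \<in> fcut c \<longleftrightarrow>
   (c = j \<and> lab_y m h ori j = (j, p)) \<or> (c = pv j \<and> lab_z m h ori j = (j, p))"
proof -
  assume c: "c < k" and j: "j < k"
  have "(j, p) \<in> fcut c \<longleftrightarrow> (j, p) = lab_y m h ori c \<or> (j, p) = lab_z m h ori (nx c)"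
    unfolding fcut_def by auto
  also have "\<dots> \<longleftrightarrow> (c = j \<and> lab_y m h ori j = (j, p)) \<or> (nx c = j \<and> lab_z m h ori j = (j, p))"
    by (metis fst_conv fst_lab(3) fst_lab(4))
  also have "\<dots> \<longleftrightarrow> (c = j \<and> lab_y m h ori j = (j, p)) \<or> (c = pv j \<and> lab_z m h ori j = (j, p))"
    using nx_eq_iff[OF c j] by simp
  finally show ?thesis .
qed

lemma labs_excl0:
  assumes "m j \<ge> 1" "p \<le> 2 * m j"
  shows "\<not> (lab_x m h ori j = (j,p) \<and> lab_w m h ori j = (j,p)) \<and>
    \<not> (lab_x m h ori j = (j,p) \<and> lab_y m h ori j = (j,p)) \<and>
    \<not> (lab_x m h ori j = (j,p) \<and> lab_z m h ori j = (j,p)) \<and>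
    \<not> (lab_w m h ori j = (j,p) \<and> lab_y m h ori j = (j,p)) \<and>
    \<not> (lab_w m h ori j = (j,p) \<and> lab_z m h ori j = (j,p)) \<and>
    \<not> (lab_y m h ori j = (j,p) \<and> lab_z m h ori j = (j,p))"
  using assms by (cases "h j"; cases "ori j") (auto simp: lab_simps)

lemmas labs_excl = labs_excl0[THEN conjunct1] labs_excl0[THEN conjunct2, THEN conjunct1]
  labs_excl0[THEN conjunct2, THEN conjunct2, THEN conjunct1]
  labs_excl0[THEN conjunct2, THEN conjunct2, THEN conjunct2, THEN conjunct1]
  labs_excl0[THEN conjunct2, THEN conjunct2, THEN conjunct2, THEN conjunct2, THEN conjunct1]
  labs_excl0[THEN conjunct2, THEN conjunct2, THEN conjunct2, THEN conjunct2, THEN conjunct2]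

lemma corner_cut_unique:
  assumes j: "j < k" and mj: "m j \<ge> 1" and p: "p \<le> 2 * m j"
    and e1: "iscut e1" and e2: "iscut e2" and in1: "(j,p) \<in> e1" and in2: "(j,p) \<in> e2"
  shows "e1 = e2"
proof -
  obtain c1 where c1: "c1 < k" "e1 = ecut c1 \<or> e1 = fcut c1" using e1 unfolding iscut_def by blast
  obtain c2 where c2: "c2 < k" "e2 = ecut c2 \<or> e2 = fcut c2" using e2 unfolding iscut_def by blast
  have key: "\<And>e c. c < k \<Longrightarrow> e = ecut c \<or> e = fcut c \<Longrightarrow> (j,p) \<in> e \<Longrightarrow>
     (lab_x m h ori j = (j,p) \<and> e = ecut j) \<or> (lab_w m h ori j = (j,p) \<and> e = ecut (pv j)) \<or>
     (lab_y m h ori j = (j,p) \<and> e = fcut j) \<or> (lab_z m h ori j = (j,p) \<and> e = fcut (pv j))"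
  proof -
    fix e c assume c: "c < k" and e: "e = ecut c \<or> e = fcut c" and pe: "(j,p) \<in> e"
    show "?thesis e c"
    proof (cases "e = ecut c")
      case True
      hence "(c = j \<and> lab_x m h ori j = (j, p)) \<or> (c = pv j \<and> lab_w m h ori j = (j, p))"
        using pe in_ecut[OF c j] by simp
      thus ?thesis using True by blast
    next
      case False
      hence "e = fcut c" using e by simp
      hence "(c = j \<and> lab_y m h ori j = (j, p)) \<or> (c = pv j \<and> lab_z m h ori j = (j, p))"
        using pe in_fcut[OF c j] by simp
      thus ?thesis using \<open>e = fcut c\<close> by blast
    qed
  qed
  note X = labs_excl[OF mj p]
  from key[OF c1 in1] key[OF c2 in2] X show ?thesis by (elim disjE conjE) simp_all
qed

lemma nbr_path:
  assumes j: "j < k" and p: "p \<le> 2 * m j" and e: "e \<in> PE" and pe: "(j,p) \<in> e"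
  shows "(p < 2 * m j \<and> e = {(j,p),(j,Suc p)}) \<or> (0 < p \<and> e = {(j,p-1),(j,p)})
     \<or> (even p \<and> e = {hub j,(j,p)}) \<or> (iscut e \<and> (p = 0 \<or> p = 2 * m j))"
proof -
  have "(\<exists>j'<k. e \<in> hbw_edges j' (m j')) \<or> iscut e" using e unfolding PE_iff iscut_def by blast
  thus ?thesis
  proof
    assume "\<exists>j'<k. e \<in> hbw_edges j' (m j')"
    then obtain j' where j': "j' < k" "e \<in> hbw_edges j' (m j')" by blast
    have jj: "j' = j" using internal_fst[OF j'(2) pe] by simp
    have "(\<exists>q < 2 * m j. e = {(j,q), (j, Suc q)}) \<or> (\<exists>q \<le> m j. e = {(j, 2*m j+1), (j, 2*q)})"
      using j'(2) jj unfolding hbw_edges_iff by simp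
    thus ?thesis
    proof
      assume "\<exists>q < 2 * m j. e = {(j,q), (j, Suc q)}"
      then obtain q where q: "q < 2 * m j" "e = {(j,q), (j, Suc q)}" by blast
      hence "p = q \<or> p = Suc q" using pe by auto
      thus ?thesis using q by auto
    next
      assume "\<exists>q \<le> m j. e = {(j, 2*m j+1), (j, 2*q)}"
      then obtain q where q: "q \<le> m j" "e = {(j, 2*m j+1), (j, 2*q)}" by blast
      hence "p = 2 * q" using pe p by auto
      thus ?thesis using q by (auto simp: hub_def)
    qed
  next
    assume ic: "iscut e"
    then obtain c where c: "c < k" "e = ecut c \<or> e = fcut c" unfolding iscut_def by blast
    hence "(j,p) \<in> ecut c \<union> fcut c" using pe by auto
    from cut_vertex[OF c(1) this] p have "p = 0 \<or> p = 2 * m j" by auto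
    thus ?thesis using ic by auto
  qed
qed

lemma nbr_odd:
  assumes j: "j < k" and p: "p < 2 * m j" and op: "odd p" and e: "e \<in> PE" and pe: "(j,p) \<in> e"
  shows "e = {(j,p-1),(j,p)} \<or> e = {(j,p),(j,Suc p)}"
  using nbr_path[OF j _ e pe] p op by auto

lemma nbr_hub:
  assumes j: "j < k" and e: "e \<in> PE" and he: "hub j \<in> e"
  shows "(\<exists>q \<le> m j. e = {hub j, (j, 2*q)}) \<or> iscut e"
proof -
  have "(\<exists>j'<k. e \<in> hbw_edges j' (m j')) \<or> iscut e" using e unfolding PE_iff iscut_def by blast
  thus ?thesis
  proof
    assume "\<exists>j'<k. e \<in> hbw_edges j' (m j')"
    then obtain j' where j': "j' < k" "e \<in> hbw_edges j' (m j')" by blast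
    have jj: "j' = j" using internal_fst[OF j'(2) he] by (simp add: hub_def)
    have "(\<exists>q < 2 * m j. e = {(j,q), (j, Suc q)}) \<or> (\<exists>q \<le> m j. e = {(j, 2*m j+1), (j, 2*q)})"
      using j'(2) jj unfolding hbw_edges_iff by simp
    thus ?thesis using he by (auto simp: hub_def)
  qed simp
qed

lemma nx_bij: "nx ` {..<k} = {..<k}"
proof -
  have "inj_on nx {..<k}" using nx_inj by (auto intro: inj_onI)
  moreover have "nx ` {..<k} \<subseteq> {..<k}" using nx_less by auto
  ultimately show ?thesis by (simp add: endo_inj_surj)
qed

lemma sum_nx: "(\<Sum>c<k. g (nx c)) = (\<Sum>c<k. (g c :: nat))"
proof -
  have "inj_on nx {..<k}" using nx_inj by (auto intro: inj_onI)
  hence "(\<Sum>c\<in>nx ` {..<k}. g c) = (\<Sum>c<k. g (nx c))" by (simp add: sum.reindex)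
  thus ?thesis using nx_bij by simp
qed

lemma crossed_odd:
  assumes k: "odd k"
  shows "odd (card {c. c < k \<and> h c = h (nx c)})"
proof -
  let ?b = "\<lambda>c. if h c then 1 else (0::nat)"
  have "(\<Sum>c<k. ?b c + ?b (nx c)) = 2 * (\<Sum>c<k. ?b c)"
    using sum_nx[of ?b] by (simp add: sum.distrib)
  moreover have "(\<Sum>c<k. ?b c + ?b (nx c)) = (\<Sum>c<k. 2 * (if h c \<and> h (nx c) then 1 else 0) + (if h c \<noteq> h (nx c) then 1 else 0))"
    by (rule sum.cong) auto
  ultimately have "2 * (\<Sum>c<k. ?b c) = 2 * (\<Sum>c<k. (if h c \<and> h (nx c) then 1 else (0::nat))) + (\<Sum>c<k. (if h c \<noteq> h (nx c) then 1 else (0::nat)))"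
    by (simp add: sum.distrib sum_distrib_left[symmetric])
  hence "even (2 * (\<Sum>c<k. (if h c \<and> h (nx c) then 1 else (0::nat))) + (\<Sum>c<k. (if h c \<noteq> h (nx c) then 1 else (0::nat))))"
    by (metis dvd_triv_left)
  hence "even (\<Sum>c<k. (if h c \<noteq> h (nx c) then 1 else (0::nat)))" by simp
  moreover have "(\<Sum>c<k. (if h c \<noteq> h (nx c) then 1 else (0::nat))) = card {c. c < k \<and> h c \<noteq> h (nx c)}"
    using sum.inter_filter[of "{..<k}" "\<lambda>_. 1::nat" "\<lambda>c. h c \<noteq> h (nx c)"]
    by (simp add: lessThan_def Collect_conj_eq[symmetric])
  ultimately have ev: "even (card {c. c < k \<and> h c \<noteq> h (nx c)})" by simp
  have "card {c. c < k \<and> h c = h (nx c)} + card {c. c < k \<and> h c \<noteq> h (nx c)} = k"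
  proof -
    have "{c. c < k \<and> h c = h (nx c)} \<union> {c. c < k \<and> h c \<noteq> h (nx c)} = {..<k}" by auto
    moreover have "{c. c < k \<and> h c = h (nx c)} \<inter> {c. c < k \<and> h c \<noteq> h (nx c)} = {}" by auto
    ultimately show ?thesis using card_Un_disjoint[of "{c. c < k \<and> h c = h (nx c)}" "{c. c < k \<and> h c \<noteq> h (nx c)}"]
      by simp
  qed
  thus ?thesis using ev k by presburger
qed

end



lemma card_pair_int: "u \<noteq> v \<Longrightarrow> card ({u, v} \<inter> X) = 1 \<longleftrightarrow> (u \<in> X) \<noteq> (v \<in> X)"
  by (cases "u \<in> X"; cases "v \<in> X") auto

lemma sum_odd_parity: "finite A \<Longrightarrow> (\<forall>a\<in>A. odd (f a :: nat)) \<Longrightarrow> (even (sum f A) \<longleftrightarrow> even (card A))"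
proof (induction A rule: finite_induct)
  case empty thus ?case by simp
next
  case (insert x F) thus ?case by (simp add: card_insert_if)
qed

locale prism_cyc = prism +
  fixes cs :: "(nat \<times> nat) list"
  assumes cyc: "is_cycle PE cs" and oddk: "odd k" and evn: "even (length cs)"
begin

abbreviation "S \<equiv> set cs"
abbreviation "EC \<equiv> cyc_edges cs"

lemma dist: "distinct cs" and len3: "length cs \<ge> 3" using cyc unfolding is_cycle_def by auto

lemma EC_PE: "EC \<subseteq> PE" using cyc_edges_E[OF cyc] .
lemma EC_S: "e \<in> EC \<Longrightarrow> e \<subseteq> S" using cyc_edges_sub .
lemma deg2: "v \<in> S \<Longrightarrow> card {e\<in>EC. v\<in>e} = 2" using cyc_deg[OF dist len3] .
lemma crs_even: "finite X \<Longrightarrow> even (card {e\<in>EC. card (e \<inter> X) = 1})" using cyc_crs_even[OF dist len3] .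
lemma fin_EC: "finite EC" unfolding cyc_edges_def by simp
lemma card_EC: "card EC = length cs" using card_cyc_edges[OF dist len3] .

lemma S_PV: "S \<subseteq> PV"
proof
  fix v assume v: "v \<in> S"
  have "card {e\<in>EC. v\<in>e} = 2" using deg2[OF v] .
  hence "{e\<in>EC. v\<in>e} \<noteq> {}" by (metis card.empty zero_neq_numeral)
  then obtain e where "e \<in> EC" "v \<in> e" by blast
  thus "v \<in> PV" using EC_PE PE_sub by blast
qed

definition t :: "nat \<Rightarrow> nat" where "t c = card (EC \<inter> {ecut c, fcut c})"
definition blk :: "nat \<Rightarrow> (nat \<times> nat) set" where "blk j = {v \<in> PV. fst v = j}"

lemma fin_PV: "finite PV" unfolding prism_verts_def hbw_verts_def by auto

lemma cut_pair: "c < k \<Longrightarrow> e = ecut c \<or> e = fcut c \<Longrightarrow>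
   \<exists>a b. e = {a, b} \<and> fst a = c \<and> fst b = nx c \<and> a \<in> PV \<and> b \<in> PV \<and> a \<noteq> b"
proof -
  assume c: "c < k" and e: "e = ecut c \<or> e = fcut c"
  have nc: "nx c \<noteq> c" using nx_ne[OF c] .
  show ?thesis using e
  proof
    assume "e = ecut c"
    thus ?thesis unfolding ecut_def using lab_in_PV c nx_less nc
      by (intro exI[of _ "lab_x m h ori c"] exI[of _ "lab_w m h ori (nx c)"]) (auto dest: arg_cong[of _ _ fst])
  next
    assume "e = fcut c"
    thus ?thesis unfolding fcut_def using lab_in_PV c nx_less nc
      by (intro exI[of _ "lab_y m h ori c"] exI[of _ "lab_z m h ori (nx c)"]) (auto dest: arg_cong[of _ _ fst])
  qed
qed

lemma internal_pair: "e \<in> hbw_edges j (m j) \<Longrightarrow> j < k \<Longrightarrow>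
   \<exists>a b. e = {a, b} \<and> fst a = j \<and> fst b = j \<and> a \<in> PV \<and> b \<in> PV \<and> a \<noteq> b"
proof -
  assume e: "e \<in> hbw_edges j (m j)" and j: "j < k"
  have "(\<exists>p < 2 * m j. e = {(j,p), (j, Suc p)}) \<or> (\<exists>q \<le> m j. e = {(j, 2*m j+1), (j, 2*q)})"
    using e unfolding hbw_edges_iff .
  thus ?thesis
  proof
    assume "\<exists>p < 2 * m j. e = {(j,p), (j, Suc p)}"
    then obtain p where p: "p < 2 * m j" "e = {(j,p), (j, Suc p)}" by blast
    show ?thesis using p j by (intro exI[of _ "(j,p)"] exI[of _ "(j,Suc p)"]) (simp add: PV_iff)
  next
    assume "\<exists>q \<le> m j. e = {(j, 2*m j+1), (j, 2*q)}"
    then obtain q where q: "q \<le> m j" "e = {(j, 2*m j+1), (j, 2*q)}" by blast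
    show ?thesis using q j by (intro exI[of _ "(j, 2*m j+1)"] exI[of _ "(j,2*q)"]) (simp add: PV_iff)
  qed
qed

lemma crs_blk_iff:
  assumes j: "j < k" and e: "e \<in> PE"
  shows "card (e \<inter> blk j) = 1 \<longleftrightarrow> e \<in> {ecut j, fcut j} \<or> e \<in> {ecut (pv j), fcut (pv j)}"
proof -
  have "(\<exists>j'<k. e \<in> hbw_edges j' (m j')) \<or> iscut e" using e unfolding PE_iff iscut_def by blast
  thus ?thesis
  proof
    assume "\<exists>j'<k. e \<in> hbw_edges j' (m j')"
    then obtain j' where j': "j' < k" "e \<in> hbw_edges j' (m j')" by blast
    obtain a b where ab: "e = {a, b}" "fst a = j'" "fst b = j'" "a \<in> PV" "b \<in> PV" "a \<noteq> b"
      using internal_pair[OF j'(2) j'(1)] by blast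
    have "card (e \<inter> blk j) \<noteq> 1" using ab card_pair_int[of a b "blk j"] unfolding blk_def by auto
    moreover have "\<not> iscut e" using iscut_not_internal j'(2) by blast
    ultimately show ?thesis using pv_less[OF j] j unfolding iscut_def by blast
  next
    assume "iscut e"
    then obtain c where c: "c < k" "e = ecut c \<or> e = fcut c" unfolding iscut_def by blast
    obtain a b where ab: "e = {a, b}" "fst a = c" "fst b = nx c" "a \<in> PV" "b \<in> PV" "a \<noteq> b"
      using cut_pair[OF c(1) c(2)] by blast
    have "card (e \<inter> blk j) = 1 \<longleftrightarrow> (c = j) \<noteq> (nx c = j)"
      using ab card_pair_int[of a b "blk j"] unfolding blk_def by auto
    also have "\<dots> \<longleftrightarrow> c = j \<or> c = pv j" using nx_ne[OF c(1)] nx_eq_iff[OF c(1) j] by auto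
    also have "\<dots> \<longleftrightarrow> e \<in> {ecut j, fcut j} \<or> e \<in> {ecut (pv j), fcut (pv j)}"
      using c cut_eq_cut[OF c(1) j, of e] cut_eq_cut[OF c(1) pv_less[OF j], of e] by auto
    finally show ?thesis .
  qed
qed

lemma t_pair: assumes j: "j < k" shows "even (t j + t (pv j))"
proof -
  have "{e\<in>EC. card (e \<inter> blk j) = 1} = (EC \<inter> {ecut j, fcut j}) \<union> (EC \<inter> {ecut (pv j), fcut (pv j)})"
    using crs_blk_iff[OF j] EC_PE by blast
  moreover have "(EC \<inter> {ecut j, fcut j}) \<inter> (EC \<inter> {ecut (pv j), fcut (pv j)}) = {}"
  proof (rule ccontr)
    assume "(EC \<inter> {ecut j, fcut j}) \<inter> (EC \<inter> {ecut (pv j), fcut (pv j)}) \<noteq> {}"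
    then obtain e where "e = ecut j \<or> e = fcut j" "e = ecut (pv j) \<or> e = fcut (pv j)" by blast
    hence "j = pv j" using cut_eq_cut[OF j pv_less[OF j]] by blast
    thus False using pv_ne[OF j] by simp
  qed
  ultimately have "card {e\<in>EC. card (e \<inter> blk j) = 1} = t j + t (pv j)"
    unfolding t_def using fin_EC by (simp add: card_Un_disjoint)
  moreover have "finite (blk j)" unfolding blk_def using fin_PV by simp
  ultimately show ?thesis using crs_even[of "blk j"] by simp
qed

lemma t_parity: "j < k \<Longrightarrow> even (t j) \<longleftrightarrow> even (t 0)"
proof (induction j)
  case 0 thus ?case by simp
next
  case (Suc j)
  have "pv (Suc j) = j" unfolding pv_def by simp
  hence "even (t (Suc j) + t j)" using t_pair[OF Suc.prems] by simp
  thus ?case using Suc by simp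
qed

definition Odd :: "(nat \<times> nat) set" where "Odd = {v \<in> PV. odd (snd v)}"

lemma mono_iff:
  assumes e: "e \<in> PE"
  shows "card (e \<inter> Odd) \<noteq> 1 \<longleftrightarrow> (\<exists>c<k. h c = h (nx c) \<and> (e = ecut c \<or> e = fcut c))"
proof -
  have "(\<exists>j'<k. e \<in> hbw_edges j' (m j')) \<or> iscut e" using e unfolding PE_iff iscut_def by blast
  thus ?thesis
  proof
    assume "\<exists>j'<k. e \<in> hbw_edges j' (m j')"
    then obtain j' where j': "j' < k" "e \<in> hbw_edges j' (m j')" by blast
    have "\<not> iscut e" using iscut_not_internal j'(2) by blast
    moreover have "card (e \<inter> Odd) = 1"
    proof -
      have "(\<exists>p < 2 * m j'. e = {(j',p), (j', Suc p)}) \<or> (\<exists>q \<le> m j'. e = {(j', 2*m j'+1), (j', 2*q)})"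
        using j'(2) unfolding hbw_edges_iff .
      thus ?thesis
      proof
        assume "\<exists>p < 2 * m j'. e = {(j',p), (j', Suc p)}"
        then obtain p where p: "p < 2 * m j'" "e = {(j',p), (j', Suc p)}" by blast
        thus ?thesis using card_pair_int[of "(j',p)" "(j',Suc p)" Odd] j'(1) unfolding Odd_def by (auto simp: PV_iff)
      next
        assume "\<exists>q \<le> m j'. e = {(j', 2*m j'+1), (j', 2*q)}"
        then obtain q where q: "q \<le> m j'" "e = {(j', 2*m j'+1), (j', 2*q)}" by blast
        thus ?thesis using card_pair_int[of "(j', 2*m j'+1)" "(j',2*q)" Odd] j'(1) unfolding Odd_def by (auto simp: PV_iff)
      qed
    qed
    ultimately show ?thesis unfolding iscut_def by blast
  next
    assume "iscut e"
    then obtain c where c: "c < k" "e = ecut c \<or> e = fcut c" unfolding iscut_def by blast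
    have uniq: "\<And>c'. c' < k \<Longrightarrow> e = ecut c' \<or> e = fcut c' \<Longrightarrow> c' = c" using cut_eq_cut c by blast
    have "card (e \<inter> Odd) \<noteq> 1 \<longleftrightarrow> h c = h (nx c)"
      using c(2)
    proof
      assume ec: "e = ecut c"
      have ne: "lab_x m h ori c \<noteq> lab_w m h ori (nx c)" using nx_ne[OF c(1)] by (metis fst_lab(1) fst_lab(2))
      show ?thesis unfolding ec ecut_def using card_pair_int[OF ne, of Odd] lab_in_PV c(1) nx_less
        unfolding Odd_def by (auto simp: lab_simps)
    next
      assume ec: "e = fcut c"
      have ne: "lab_y m h ori c \<noteq> lab_z m h ori (nx c)" using nx_ne[OF c(1)] by (metis fst_lab(3) fst_lab(4))
      show ?thesis unfolding ec fcut_def using card_pair_int[OF ne, of Odd] lab_in_PV c(1) nx_less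
        unfolding Odd_def by (auto simp: lab_simps)
    qed
    thus ?thesis using uniq c by blast
  qed
qed

lemma all_t_even: "c < k \<Longrightarrow> even (t c)"
proof (rule ccontr)
  assume c: "c < k" and nt: "\<not> even (t c)"
  have allodd: "\<forall>c'<k. odd (t c')" using t_parity nt c by blast
  let ?C = "{c. c < k \<and> h c = h (nx c)}"
  have "{e\<in>EC. card (e \<inter> Odd) \<noteq> 1} = (\<Union>c\<in>?C. EC \<inter> {ecut c, fcut c})"
    using mono_iff EC_PE by blast
  moreover have "card (\<Union>c\<in>?C. EC \<inter> {ecut c, fcut c}) = (\<Sum>c\<in>?C. t c)"
    unfolding t_def
  proof (rule card_UN_disjoint)
    show "finite ?C" by simp
    show "\<forall>i\<in>?C. finite (EC \<inter> {ecut i, fcut i})" by simp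
    show "\<forall>i\<in>?C. \<forall>j\<in>?C. i \<noteq> j \<longrightarrow> (EC \<inter> {ecut i, fcut i}) \<inter> (EC \<inter> {ecut j, fcut j}) = {}"
      using cut_eq_cut by blast
  qed
  ultimately have M: "card {e\<in>EC. card (e \<inter> Odd) \<noteq> 1} = (\<Sum>c\<in>?C. t c)" by simp
  have "odd (\<Sum>c\<in>?C. t c)" using sum_odd_parity[of ?C t] allodd crossed_odd[OF oddk] by simp
  moreover have "even (card {e\<in>EC. card (e \<inter> Odd) = 1})" using crs_even fin_PV unfolding Odd_def by simp
  moreover have "card EC = card {e\<in>EC. card (e \<inter> Odd) = 1} + card {e\<in>EC. card (e \<inter> Odd) \<noteq> 1}"
  proof -
    have "EC = {e\<in>EC. card (e \<inter> Odd) = 1} \<union> {e\<in>EC. card (e \<inter> Odd) \<noteq> 1}" by auto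
    moreover have "card ({e\<in>EC. card (e \<inter> Odd) = 1} \<union> {e\<in>EC. card (e \<inter> Odd) \<noteq> 1})
      = card {e\<in>EC. card (e \<inter> Odd) = 1} + card {e\<in>EC. card (e \<inter> Odd) \<noteq> 1}"
      by (rule card_Un_disjoint) (use fin_EC in auto)
    ultimately show ?thesis by simp
  qed
  ultimately have "odd (card EC)" using M by simp
  thus False using card_EC evn by simp
qed

lemma balanced: "c < k \<Longrightarrow> ecut c \<in> EC \<longleftrightarrow> fcut c \<in> EC"
proof -
  assume c: "c < k"
  have "even (card (EC \<inter> {ecut c, fcut c}))" using all_t_even[OF c] unfolding t_def .
  moreover have "ecut c \<noteq> fcut c" using ecut_ne_fcut[OF c] .
  ultimately show ?thesis by (cases "ecut c \<in> EC"; cases "fcut c \<in> EC") auto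
qed

end



lemma card_le1_eq: "finite A \<Longrightarrow> A \<subseteq> {x} \<Longrightarrow> card A \<le> 1"
  using card_mono[of "{x}" A] by simp

context prism_cyc
begin

lemma EC_both: "c < k \<Longrightarrow> e \<in> EC \<Longrightarrow> e = ecut c \<or> e = fcut c \<Longrightarrow> ecut c \<union> fcut c \<subseteq> S"
  using balanced EC_S by blast

lemma cutEC_hub: "e \<in> EC \<Longrightarrow> iscut e \<Longrightarrow> v \<in> e \<Longrightarrow> hub (fst v) \<in> S"
proof -
  assume e: "e \<in> EC" "iscut e" "v \<in> e"
  then obtain c where c: "c < k" "e = ecut c \<or> e = fcut c" unfolding iscut_def by blast
  have "v \<in> ecut c \<union> fcut c" using c e by auto
  hence "hub (fst v) \<in> ecut c \<union> fcut c" using cut_hub c by blast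
  thus ?thesis using EC_both[OF c(1) e(1) c(2)] by blast
qed

lemma cutEC_corner: "e \<in> EC \<Longrightarrow> iscut e \<Longrightarrow> v \<in> e \<Longrightarrow> \<exists>u\<in>S. fst u = fst v \<and> snd u \<le> 2 * m (fst v)"
proof -
  assume e: "e \<in> EC" "iscut e" "v \<in> e"
  then obtain c where c: "c < k" "e = ecut c \<or> e = fcut c" unfolding iscut_def by blast
  have "v \<in> ecut c \<union> fcut c" using c e by auto
  then obtain u where "u \<in> ecut c \<union> fcut c" "fst u = fst v" "snd u \<le> 2 * m (fst v)" using cut_corner c by blast
  thus ?thesis using EC_both[OF c(1) e(1) c(2)] by blast
qed

lemma deg_contra: "v \<in> S \<Longrightarrow> {e\<in>EC. v\<in>e} \<subseteq> {x} \<Longrightarrow> False"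
  using deg2[of v] card_le1_eq[of "{e\<in>EC. v\<in>e}" x] fin_EC by simp

lemma B1: assumes j: "j < k" and hj: "hub j \<notin> S" shows "\<forall>p \<le> 2 * m j. (j, p) \<notin> S"
proof (rule ccontr)
  assume "\<not> (\<forall>p \<le> 2 * m j. (j, p) \<notin> S)"
  hence "\<exists>p. (j,p) \<in> S \<and> p \<le> 2 * m j" by auto
  then obtain p where p: "(j,p) \<in> S" "p \<le> 2 * m j" and mn: "\<forall>q<p. \<not> ((j,q) \<in> S \<and> q \<le> 2 * m j)"
    using exists_least_iff[of "\<lambda>p. (j,p) \<in> S \<and> p \<le> 2 * m j"] by blast
  have "{e\<in>EC. (j,p)\<in>e} \<subseteq> {{(j,p),(j,Suc p)}}"
  proof
    fix e assume e: "e \<in> {e\<in>EC. (j,p)\<in>e}"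
    hence eE: "e \<in> EC" "(j,p) \<in> e" by auto
    have eS: "e \<subseteq> S" using EC_S eE(1) .
    from nbr_path[OF j p(2) _ eE(2)] eE(1) EC_PE
    have "(p < 2 * m j \<and> e = {(j,p),(j,Suc p)}) \<or> (0 < p \<and> e = {(j,p-1),(j,p)})
       \<or> (even p \<and> e = {hub j,(j,p)}) \<or> (iscut e \<and> (p = 0 \<or> p = 2 * m j))" by blast
    moreover have "\<not> (0 < p \<and> e = {(j,p-1),(j,p)})" using mn eS p(2) by auto
    moreover have "\<not> (even p \<and> e = {hub j,(j,p)})" using hj eS by auto
    moreover have "\<not> iscut e" using cutEC_hub[OF eE(1) _ eE(2)] hj by auto
    ultimately show "e \<in> {{(j,p),(j,Suc p)}}" by auto
  qed
  thus False using deg_contra p(1) by blast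
qed

lemma B2: assumes j: "j < k" and hj: "hub j \<in> S" shows "\<exists>p \<le> 2 * m j. (j, p) \<in> S"
proof -
  have "card {e\<in>EC. hub j\<in>e} = 2" using deg2[OF hj] .
  hence "{e\<in>EC. hub j\<in>e} \<noteq> {}" by (metis card.empty zero_neq_numeral)
  then obtain e where e: "e \<in> EC" "hub j \<in> e" by blast
  have eS: "e \<subseteq> S" using EC_S e(1) .
  from nbr_hub[OF j _ e(2)] e(1) EC_PE have "(\<exists>q \<le> m j. e = {hub j, (j, 2*q)}) \<or> iscut e" by blast
  thus ?thesis
  proof
    assume "\<exists>q \<le> m j. e = {hub j, (j, 2*q)}"
    then obtain q where q: "q \<le> m j" "e = {hub j, (j, 2*q)}" by blast
    show ?thesis using eS q by (intro exI[of _ "2*q"]) auto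
  next
    assume "iscut e"
    from cutEC_corner[OF e(1) this e(2)] show ?thesis by (auto simp: hub_def)
  qed
qed

lemma B3min: assumes j: "j < k" and a: "(j,a) \<in> S" "a \<le> 2 * m j" and mn: "\<forall>q<a. (j,q) \<notin> S"
  shows "even a"
proof (rule ccontr)
  assume oa: "\<not> even a"
  hence a2: "a < 2 * m j" using a(2) by (metis dvd_triv_left le_neq_implies_less)
  have "{e\<in>EC. (j,a)\<in>e} \<subseteq> {{(j,a),(j,Suc a)}}"
  proof
    fix e assume e: "e \<in> {e\<in>EC. (j,a)\<in>e}"
    hence eE: "e \<in> EC" "(j,a) \<in> e" by auto
    have eS: "e \<subseteq> S" using EC_S eE(1) .
    from nbr_odd[OF j a2 _ _ eE(2)] oa eE(1) EC_PE have "e = {(j,a-1),(j,a)} \<or> e = {(j,a),(j,Suc a)}" by blast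
    moreover have "e \<noteq> {(j,a-1),(j,a)}" using mn eS oa by (metis diff_less insert_subset odd_pos zero_less_one)
    ultimately show "e \<in> {{(j,a),(j,Suc a)}}" by auto
  qed
  thus False using deg_contra a(1) by blast
qed

lemma B3max: assumes j: "j < k" and b: "(j,b) \<in> S" "b \<le> 2 * m j" and mx: "\<forall>q. b < q \<and> q \<le> 2 * m j \<longrightarrow> (j,q) \<notin> S"
  shows "even b"
proof (rule ccontr)
  assume ob: "\<not> even b"
  hence b2: "b < 2 * m j" using b(2) by (metis dvd_triv_left le_neq_implies_less)
  have "{e\<in>EC. (j,b)\<in>e} \<subseteq> {{(j,b-1),(j,b)}}"
  proof
    fix e assume e: "e \<in> {e\<in>EC. (j,b)\<in>e}"
    hence eE: "e \<in> EC" "(j,b) \<in> e" by auto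
    have eS: "e \<subseteq> S" using EC_S eE(1) .
    from nbr_odd[OF j b2 _ _ eE(2)] ob eE(1) EC_PE have "e = {(j,b-1),(j,b)} \<or> e = {(j,b),(j,Suc b)}" by blast
    moreover have "e \<noteq> {(j,b),(j,Suc b)}" using mx eS b2 by auto
    ultimately show "e \<in> {{(j,b-1),(j,b)}}" by auto
  qed
  thus False using deg_contra b(1) by blast
qed

end



lemma two_elems: "finite A \<Longrightarrow> card A \<ge> 2 \<Longrightarrow> \<exists>x y. x \<in> A \<and> y \<in> A \<and> x \<noteq> y"
proof (rule ccontr)
  assume f: "finite A" and c: "card A \<ge> 2" and n: "\<not> (\<exists>x y. x \<in> A \<and> y \<in> A \<and> x \<noteq> y)"
  have "A \<noteq> {}" using c by auto
  then obtain x where x: "x \<in> A" by blast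
  hence "A \<subseteq> {x}" using n by blast
  hence "card A \<le> 1" using card_mono[of "{x}" A] by simp
  thus False using c by simp
qed

lemma three_elems: "finite A \<Longrightarrow> x \<in> A \<Longrightarrow> y \<in> A \<Longrightarrow> z \<in> A \<Longrightarrow> x \<noteq> y \<Longrightarrow> x \<noteq> z \<Longrightarrow> y \<noteq> z \<Longrightarrow> card A \<ge> 3"
  using card_mono[of A "{x,y,z}"] by simp

context prism_cyc
begin

lemma cut_other: "iscut e \<Longrightarrow> (j,q) \<in> e \<Longrightarrow> \<exists>u. e = {(j,q), u} \<and> fst u \<noteq> j"
proof -
  assume e: "iscut e" "(j,q) \<in> e"
  then obtain c where c: "c < k" "e = ecut c \<or> e = fcut c" unfolding iscut_def by blast
  obtain a b where ab: "e = {a, b}" "fst a = c" "fst b = nx c" "a \<noteq> b"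
    using cut_pair[OF c(1) c(2)] by blast
  have "nx c \<noteq> c" using nx_ne[OF c(1)] .
  thus ?thesis using ab e(2) by (metis fst_conv insert_commute insert_iff singletonD)
qed

lemma B4:
  assumes j: "j < k" and hj: "hub j \<in> S" and a: "(j,a) \<in> S" and b: "(j,b) \<in> S"
    and ap: "a < p" and pb: "p < b" and b2: "b \<le> 2 * m j"
  shows "(j,p) \<in> S"
proof (rule ccontr)
  assume np: "(j,p) \<notin> S"
  have mj: "m j \<ge> 1" using ap pb b2 by simp
  define L where "L = {v \<in> PV. fst v = j \<and> snd v < p}"
  define R where "R = {v \<in> PV. fst v = j \<and> p < snd v \<and> snd v \<le> 2 * m j}"
  define HL where "HL = {e. \<exists>q<p. e = {hub j, (j,q)}}"
  define HR where "HR = {e. \<exists>q. p < q \<and> q \<le> 2 * m j \<and> e = {hub j, (j,q)}}"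
  have hubL: "hub j \<notin> L" and hubR: "hub j \<notin> R" unfolding L_def R_def hub_def using pb b2 by auto
  have finL: "finite L" and finR: "finite R" unfolding L_def R_def using fin_PV by auto
  have inL: "\<And>q. q < p \<Longrightarrow> (j,q) \<in> L" unfolding L_def using pb b2 j by (auto simp: PV_iff)
  have inR: "\<And>q. p < q \<Longrightarrow> q \<le> 2 * m j \<Longrightarrow> (j,q) \<in> R" unfolding R_def using j by (auto simp: PV_iff)
  have pair1: "\<And>x y X. x \<noteq> y \<Longrightarrow> x \<in> X \<Longrightarrow> y \<in> X \<Longrightarrow> card ({x,y} \<inter> X) \<noteq> 1"
    by (simp add: Int_absorb2)
  have crsL: "\<And>e. e \<in> EC \<Longrightarrow> card (e \<inter> L) = 1 \<Longrightarrow> e \<in> HL \<or> (iscut e \<and> (j,0) \<in> e)"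
  proof -
    fix e assume e: "e \<in> EC" "card (e \<inter> L) = 1"
    have eS: "e \<subseteq> S" using EC_S e(1) .
    have "e \<inter> L \<noteq> {}" using e(2) by auto
    then obtain u where u: "u \<in> e" "u \<in> L" by blast
    obtain q where uq: "u = (j,q)" "q < p" using u(2) unfolding L_def by (cases u) auto
    have q2: "q \<le> 2 * m j" using uq pb b2 by simp
    from nbr_path[OF j q2 _ _] e(1) EC_PE u(1) uq(1)
    have "(q < 2 * m j \<and> e = {(j,q),(j,Suc q)}) \<or> (0 < q \<and> e = {(j,q-1),(j,q)})
       \<or> (even q \<and> e = {hub j,(j,q)}) \<or> (iscut e \<and> (q = 0 \<or> q = 2 * m j))" by blast
    moreover have "\<not> (q < 2 * m j \<and> e = {(j,q),(j,Suc q)})"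
    proof
      assume c1: "q < 2 * m j \<and> e = {(j,q),(j,Suc q)}"
      show False
      proof (cases "Suc q = p")
        case True thus False using c1 eS np by auto
      next
        case False
        hence "Suc q < p" using uq by simp
        thus False using c1 e(2) pair1[of "(j,q)" "(j,Suc q)" L] inL uq by auto
      qed
    qed
    moreover have "\<not> (0 < q \<and> e = {(j,q-1),(j,q)})"
      using e(2) pair1[of "(j,q-1)" "(j,q)" L] inL uq by auto
    ultimately show "e \<in> HL \<or> (iscut e \<and> (j,0) \<in> e)"
      unfolding HL_def using uq u(1) pb b2 by auto
  qed
  have crsR: "\<And>e. e \<in> EC \<Longrightarrow> card (e \<inter> R) = 1 \<Longrightarrow> e \<in> HR \<or> (iscut e \<and> (j,2 * m j) \<in> e)"
  proof -
    fix e assume e: "e \<in> EC" "card (e \<inter> R) = 1"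
    have eS: "e \<subseteq> S" using EC_S e(1) .
    have "e \<inter> R \<noteq> {}" using e(2) by auto
    then obtain u where u: "u \<in> e" "u \<in> R" by blast
    obtain q where uq: "u = (j,q)" "p < q" "q \<le> 2 * m j" using u(2) unfolding R_def by (cases u) auto
    from nbr_path[OF j uq(3) _ _] e(1) EC_PE u(1) uq(1)
    have "(q < 2 * m j \<and> e = {(j,q),(j,Suc q)}) \<or> (0 < q \<and> e = {(j,q-1),(j,q)})
       \<or> (even q \<and> e = {hub j,(j,q)}) \<or> (iscut e \<and> (q = 0 \<or> q = 2 * m j))" by blast
    moreover have "\<not> (q < 2 * m j \<and> e = {(j,q),(j,Suc q)})"
      using e(2) pair1[of "(j,q)" "(j,Suc q)" R] inR uq by auto
    moreover have "\<not> (0 < q \<and> e = {(j,q-1),(j,q)})"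
    proof
      assume c1: "0 < q \<and> e = {(j,q-1),(j,q)}"
      show False
      proof (cases "q - 1 = p")
        case True thus False using c1 eS np by auto
      next
        case False
        hence "p < q - 1" using uq by simp
        thus False using c1 e(2) pair1[of "(j,q-1)" "(j,q)" R] inR uq by auto
      qed
    qed
    ultimately show "e \<in> HR \<or> (iscut e \<and> (j,2 * m j) \<in> e)"
      unfolding HR_def using uq u(1) by auto
  qed
  have neL: "{e\<in>EC. card (e \<inter> L) = 1} \<noteq> {}"
  proof
    assume emp: "{e\<in>EC. card (e \<inter> L) = 1} = {}"
    let ?Q = "{q. q < p \<and> (j,q) \<in> S}"
    have fQ: "finite ?Q" by simp
    have "a \<in> ?Q" using a ap by simp
    hence neQ: "?Q \<noteq> {}" by blast
    define q0 where "q0 = Max ?Q"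
    have q0: "q0 < p" "(j,q0) \<in> S" using Max_in[OF fQ neQ] unfolding q0_def by auto
    have q0max: "\<And>q. q < p \<Longrightarrow> (j,q) \<in> S \<Longrightarrow> q \<le> q0" unfolding q0_def using fQ by simp
    have q02: "q0 \<le> 2 * m j" using q0 pb b2 by simp
    have "{e\<in>EC. (j,q0)\<in>e} \<subseteq> {{(j,q0-1),(j,q0)}}"
    proof
      fix e assume e: "e \<in> {e\<in>EC. (j,q0)\<in>e}"
      hence eE: "e \<in> EC" "(j,q0) \<in> e" by auto
      have eS: "e \<subseteq> S" using EC_S eE(1) .
      have nc: "card (e \<inter> L) \<noteq> 1" using emp eE(1) by blast
      from nbr_path[OF j q02 _ eE(2)] eE(1) EC_PE
      have "(q0 < 2 * m j \<and> e = {(j,q0),(j,Suc q0)}) \<or> (0 < q0 \<and> e = {(j,q0-1),(j,q0)})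
         \<or> (even q0 \<and> e = {hub j,(j,q0)}) \<or> (iscut e \<and> (q0 = 0 \<or> q0 = 2 * m j))" by blast
      moreover have "\<not> (q0 < 2 * m j \<and> e = {(j,q0),(j,Suc q0)})"
      proof
        assume c1: "q0 < 2 * m j \<and> e = {(j,q0),(j,Suc q0)}"
        hence s1: "(j, Suc q0) \<in> S" using eS by auto
        show False
        proof (cases "Suc q0 = p")
          case True thus False using s1 np by simp
        next
          case False
          hence "Suc q0 < p" using q0 by simp
          thus False using q0max[of "Suc q0"] s1 by simp
        qed
      qed
      moreover have "\<not> (even q0 \<and> e = {hub j,(j,q0)})"
      proof
        assume "even q0 \<and> e = {hub j,(j,q0)}"
        hence "card (e \<inter> L) = 1" using card_pair_int[of "hub j" "(j,q0)" L] hubL inL[OF q0(1)]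
          by (auto simp: hub_def)
        thus False using nc by simp
      qed
      moreover have "\<not> iscut e"
      proof
        assume "iscut e"
        then obtain u where u: "e = {(j,q0), u}" "fst u \<noteq> j" using cut_other eE(2) by blast
        hence "card (e \<inter> L) = 1" using card_pair_int[of "(j,q0)" u L] inL[OF q0(1)] unfolding L_def by auto
        thus False using nc by simp
      qed
      ultimately show "e \<in> {{(j,q0-1),(j,q0)}}" by auto
    qed
    thus False using deg_contra q0(2) by blast
  qed
  have neR: "{e\<in>EC. card (e \<inter> R) = 1} \<noteq> {}"
  proof
    assume emp: "{e\<in>EC. card (e \<inter> R) = 1} = {}"
    let ?Q = "{q. p < q \<and> q \<le> 2 * m j \<and> (j,q) \<in> S}"
    have fQ: "finite ?Q" by simp
    have "b \<in> ?Q" using b pb b2 by simp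
    hence neQ: "?Q \<noteq> {}" by blast
    define q1 where "q1 = Min ?Q"
    have q1: "p < q1" "q1 \<le> 2 * m j" "(j,q1) \<in> S" using Min_in[OF fQ neQ] unfolding q1_def by auto
    have q1min: "\<And>q. p < q \<Longrightarrow> q \<le> 2 * m j \<Longrightarrow> (j,q) \<in> S \<Longrightarrow> q1 \<le> q" unfolding q1_def using fQ by simp
    have "{e\<in>EC. (j,q1)\<in>e} \<subseteq> {{(j,q1),(j,Suc q1)}}"
    proof
      fix e assume e: "e \<in> {e\<in>EC. (j,q1)\<in>e}"
      hence eE: "e \<in> EC" "(j,q1) \<in> e" by auto
      have eS: "e \<subseteq> S" using EC_S eE(1) .
      have nc: "card (e \<inter> R) \<noteq> 1" using emp eE(1) by blast
      from nbr_path[OF j q1(2) _ eE(2)] eE(1) EC_PE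
      have "(q1 < 2 * m j \<and> e = {(j,q1),(j,Suc q1)}) \<or> (0 < q1 \<and> e = {(j,q1-1),(j,q1)})
         \<or> (even q1 \<and> e = {hub j,(j,q1)}) \<or> (iscut e \<and> (q1 = 0 \<or> q1 = 2 * m j))" by blast
      moreover have "\<not> (0 < q1 \<and> e = {(j,q1-1),(j,q1)})"
      proof
        assume c1: "0 < q1 \<and> e = {(j,q1-1),(j,q1)}"
        hence s1: "(j, q1 - 1) \<in> S" using eS by auto
        show False
        proof (cases "q1 - 1 = p")
          case True thus False using s1 np by simp
        next
          case False
          hence pq: "p < q1 - 1" using q1 by simp
          have "q1 - 1 \<le> 2 * m j" using q1 by simp
          from q1min[OF pq this s1] have qq: "q1 \<le> q1 - 1" .
          have "0 < q1" using c1 by blast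
          thus False using qq by arith
        qed
      qed
      moreover have "\<not> (even q1 \<and> e = {hub j,(j,q1)})"
      proof
        assume "even q1 \<and> e = {hub j,(j,q1)}"
        hence "card (e \<inter> R) = 1" using card_pair_int[of "hub j" "(j,q1)" R] hubR inR[OF q1(1) q1(2)]
          by (auto simp: hub_def)
        thus False using nc by simp
      qed
      moreover have "\<not> iscut e"
      proof
        assume "iscut e"
        then obtain u where u: "e = {(j,q1), u}" "fst u \<noteq> j" using cut_other eE(2) by blast
        hence "card (e \<inter> R) = 1" using card_pair_int[of "(j,q1)" u R] inR[OF q1(1) q1(2)] unfolding R_def by auto
        thus False using nc by simp
      qed
      ultimately show "e \<in> {{(j,q1),(j,Suc q1)}}" by auto
    qed
    thus False using deg_contra q1(3) by blast
  qed
  have L2: "card {e\<in>EC. card (e \<inter> L) = 1} \<ge> 2"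
  proof -
    have "even (card {e\<in>EC. card (e \<inter> L) = 1})" using crs_even[OF finL] .
    moreover have "card {e\<in>EC. card (e \<inter> L) = 1} \<noteq> 0" using neL fin_EC by simp
    ultimately show ?thesis by presburger
  qed
  have R2: "card {e\<in>EC. card (e \<inter> R) = 1} \<ge> 2"
  proof -
    have "even (card {e\<in>EC. card (e \<inter> R) = 1})" using crs_even[OF finR] .
    moreover have "card {e\<in>EC. card (e \<inter> R) = 1} \<noteq> 0" using neR fin_EC by simp
    ultimately show ?thesis by presburger
  qed
  obtain e1 e2 where e12: "e1 \<in> EC" "card (e1 \<inter> L) = 1" "e2 \<in> EC" "card (e2 \<inter> L) = 1" "e1 \<noteq> e2"
    using two_elems[OF _ L2] fin_EC by auto
  obtain f1 f2 where f12: "f1 \<in> EC" "card (f1 \<inter> R) = 1" "f2 \<in> EC" "card (f2 \<inter> R) = 1" "f1 \<noteq> f2"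
    using two_elems[OF _ R2] fin_EC by auto
  have j0: "0 \<le> 2 * m j" by simp
  have jm: "2 * m j \<le> 2 * m j" by simp
  obtain hL where hL: "hL \<in> EC" "hL \<in> HL"
  proof -
    have "e1 \<in> HL \<or> e2 \<in> HL"
    proof (rule ccontr)
      assume "\<not> (e1 \<in> HL \<or> e2 \<in> HL)"
      hence "iscut e1 \<and> (j,0) \<in> e1" "iscut e2 \<and> (j,0) \<in> e2" using crsL e12 by blast+
      hence "e1 = e2" using corner_cut_unique[OF j mj j0] by blast
      thus False using e12 by simp
    qed
    thus ?thesis using that e12 by blast
  qed
  obtain hR where hR: "hR \<in> EC" "hR \<in> HR"
  proof -
    have "f1 \<in> HR \<or> f2 \<in> HR"
    proof (rule ccontr)
      assume "\<not> (f1 \<in> HR \<or> f2 \<in> HR)"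
      hence "iscut f1 \<and> (j,2 * m j) \<in> f1" "iscut f2 \<and> (j,2 * m j) \<in> f2" using crsR f12 by blast+
      hence "f1 = f2" using corner_cut_unique[OF j mj jm] by blast
      thus False using f12 by simp
    qed
    thus ?thesis using that f12 by blast
  qed
  have HLhub: "\<And>e. e \<in> HL \<Longrightarrow> hub j \<in> e" unfolding HL_def by auto
  have HRhub: "\<And>e. e \<in> HR \<Longrightarrow> hub j \<in> e" unfolding HR_def by auto
  have HLR: "\<And>e. e \<in> HL \<Longrightarrow> e \<in> HR \<Longrightarrow> False"
  proof -
    fix e assume "e \<in> HL" "e \<in> HR"
    then obtain q q' where "q < p" "e = {hub j, (j,q)}" "p < q'" "q' \<le> 2 * m j" "e = {hub j, (j,q')}"
      unfolding HL_def HR_def by blast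
    thus False using pb b2 by (auto simp: hub_def doubleton_eq_iff)
  qed
  have HLnc: "\<And>e. e \<in> HL \<Longrightarrow> \<not> iscut e"
  proof
    fix e assume "e \<in> HL" "iscut e"
    then obtain u v where "u \<in> e" "v \<in> e" "fst u \<noteq> fst v" using iscut_fst by blast
    thus False using \<open>e \<in> HL\<close> unfolding HL_def by (auto simp: hub_def)
  qed
  have HRnc: "\<And>e. e \<in> HR \<Longrightarrow> \<not> iscut e"
  proof
    fix e assume "e \<in> HR" "iscut e"
    then obtain u v where "u \<in> e" "v \<in> e" "fst u \<noteq> fst v" using iscut_fst by blast
    thus False using \<open>e \<in> HR\<close> unfolding HR_def by (auto simp: hub_def)
  qed
  let ?H = "{e\<in>EC. hub j \<in> e}"
  have cH: "card ?H = 2" using deg2[OF hj] .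
  have fH: "finite ?H" using fin_EC by simp
  have "card ?H \<ge> 3"
  proof (cases "\<exists>e0\<in>EC. iscut e0 \<and> ((j,0) \<in> e0 \<or> (j, 2 * m j) \<in> e0)")
    case True
    then obtain e0 where e0: "e0 \<in> EC" "iscut e0" "(j,0) \<in> e0 \<or> (j, 2 * m j) \<in> e0" by blast
    then obtain c where c: "c < k" "e0 = ecut c \<or> e0 = fcut c" unfolding iscut_def by blast
    obtain p0 where p0: "(j,p0) \<in> e0" "p0 \<le> 2 * m j" using e0(3) by auto
    have "\<exists>\<eta>. \<eta> \<in> EC \<and> iscut \<eta> \<and> hub j \<in> \<eta>"
      using c(2)
    proof
      assume ec: "e0 = ecut c"
      have "hub j \<in> fcut c" using cut_partner_e[OF c(1) _ p0(2)] p0(1) ec by simp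
      moreover have "fcut c \<in> EC" using balanced[OF c(1)] e0(1) ec by simp
      ultimately show ?thesis using c(1) unfolding iscut_def by blast
    next
      assume ec: "e0 = fcut c"
      have "hub j \<in> ecut c" using cut_partner_f[OF c(1) _ p0(2)] p0(1) ec by simp
      moreover have "ecut c \<in> EC" using balanced[OF c(1)] e0(1) ec by simp
      ultimately show ?thesis using c(1) unfolding iscut_def by blast
    qed
    then obtain \<eta> where eta: "\<eta> \<in> EC" "iscut \<eta>" "hub j \<in> \<eta>" by blast
    show ?thesis
      by (rule three_elems[OF fH, of hL hR \<eta>])
         (use hL hR eta HLhub HRhub HLR HLnc HRnc in blast)+
  next
    case False
    have "e1 \<in> HL" "e2 \<in> HL" using crsL e12 False by blast+
    show ?thesis
      by (rule three_elems[OF fH, of e1 e2 hR])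
         (use e12 \<open>e1 \<in> HL\<close> \<open>e2 \<in> HL\<close> hR HLhub HRhub HLR in blast)+
  qed
  thus False using cH by simp
qed

end



lemma hbw_edges_iff': "e \<in> hbw_edges j n \<longleftrightarrow>
   (\<exists>p < 2 * n. e = {(j,p), (j, Suc p)}) \<or> (\<exists>q \<le> n. e = {(j, 2*n+1), (j, 2*q)})"
  unfolding hbw_edges_def by auto

definition pmon :: "'a set \<Rightarrow> 'a set set \<Rightarrow> bool" where
  "pmon T M \<longleftrightarrow> (\<forall>e\<in>M. e \<subseteq> T) \<and> (\<forall>v\<in>T. \<exists>!e. e \<in> M \<and> v \<in> e)"

lemma pmon_Un:
  assumes "pmon T1 M1" "pmon T2 M2" "T1 \<inter> T2 = {}"
  shows "pmon (T1 \<union> T2) (M1 \<union> M2)"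
  unfolding pmon_def
proof (intro conjI ballI)
  fix e assume "e \<in> M1 \<union> M2" thus "e \<subseteq> T1 \<union> T2" using assms unfolding pmon_def by blast
next
  fix v assume v: "v \<in> T1 \<union> T2"
  show "\<exists>!e. e \<in> M1 \<union> M2 \<and> v \<in> e"
  proof (cases "v \<in> T1")
    case True
    hence nv: "v \<notin> T2" using assms(3) by blast
    have "\<And>e. e \<in> M2 \<Longrightarrow> v \<notin> e" using assms(2) nv unfolding pmon_def by blast
    thus ?thesis using assms(1) True unfolding pmon_def by blast
  next
    case False
    hence nv: "v \<in> T2" using v by blast
    have "\<And>e. e \<in> M1 \<Longrightarrow> v \<notin> e" using assms(1) False unfolding pmon_def by blast
    thus ?thesis using assms(2) nv unfolding pmon_def by blast
  qed
qed

lemma pmon_UN: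
  assumes pm: "\<And>i. i \<in> I \<Longrightarrow> pmon (T i) (M i)"
    and dj: "\<And>i i'. i \<in> I \<Longrightarrow> i' \<in> I \<Longrightarrow> i \<noteq> i' \<Longrightarrow> T i \<inter> T i' = {}"
  shows "pmon (\<Union>i\<in>I. T i) (\<Union>i\<in>I. M i)"
  unfolding pmon_def
proof (intro conjI ballI)
  fix e assume "e \<in> (\<Union>i\<in>I. M i)" thus "e \<subseteq> (\<Union>i\<in>I. T i)" using pm unfolding pmon_def by blast
next
  fix v assume "v \<in> (\<Union>i\<in>I. T i)"
  then obtain i where i: "i \<in> I" "v \<in> T i" by blast
  have other: "\<And>i' e. i' \<in> I \<Longrightarrow> e \<in> M i' \<Longrightarrow> v \<in> e \<Longrightarrow> i' = i"
  proof -
    fix i' e assume a: "i' \<in> I" "e \<in> M i'" "v \<in> e"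
    have "v \<in> T i'" using pm[OF a(1)] a(2,3) unfolding pmon_def by blast
    thus "i' = i" using dj[OF i(1) a(1)] i(2) by blast
  qed
  have ex1: "\<exists>!e. e \<in> M i \<and> v \<in> e" using pm[OF i(1)] i(2) unfolding pmon_def by blast
  obtain e where e: "e \<in> M i \<and> v \<in> e" and u0: "\<forall>e'. e' \<in> M i \<and> v \<in> e' \<longrightarrow> e' = e"
    using ex1E[OF ex1] by metis
  have u: "\<And>e'. e' \<in> M i \<and> v \<in> e' \<Longrightarrow> e' = e" using u0 by blast
  show "\<exists>!e. e \<in> (\<Union>i\<in>I. M i) \<and> v \<in> e"
  proof
    show "e \<in> (\<Union>i\<in>I. M i) \<and> v \<in> e" using e i by blast
  next
    fix e' assume "e' \<in> (\<Union>i\<in>I. M i) \<and> v \<in> e'"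
    then obtain i' where "i' \<in> I" "e' \<in> M i'" "v \<in> e'" by blast
    thus "e' = e" using other u by blast
  qed
qed

definition lowM :: "nat \<Rightarrow> nat \<Rightarrow> (nat \<times> nat) set set" where
  "lowM j a = {{(j, 2*q), (j, 2*q+1)} | q. 2*q+1 < a}"
definition highM :: "nat \<Rightarrow> nat \<Rightarrow> nat \<Rightarrow> (nat \<times> nat) set set" where
  "highM j b n = {{(j, 2*q+1), (j, 2*q+2)} | q. b \<le> 2*q \<and> 2*q+2 \<le> 2*n}"

lemma BL:
  assumes ea: "even a" and eb: "even b" and ab: "a \<le> b" and bn: "b \<le> 2 * n"
  shows "pmon {(j,p) | p. p < a \<or> (b < p \<and> p \<le> 2 * n)} (lowM j a \<union> highM j b n)"
    and "lowM j a \<union> highM j b n \<subseteq> hbw_edges j n"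
proof -
  let ?T = "{(j,p) | p. p < a \<or> (b < p \<and> p \<le> 2 * n)}"
  show "lowM j a \<union> highM j b n \<subseteq> hbw_edges j n"
  proof
    fix e assume "e \<in> lowM j a \<union> highM j b n"
    then consider q where "e = {(j, 2*q), (j, 2*q+1)}" "2*q+1 < a"
      | q where "e = {(j, 2*q+1), (j, 2*q+2)}" "b \<le> 2*q" "2*q+2 \<le> 2*n"
      unfolding lowM_def highM_def by blast
    thus "e \<in> hbw_edges j n"
    proof cases
      case 1 thus ?thesis unfolding hbw_edges_iff' using ab bn by (intro disjI1 exI[of _ "2*q"]) auto
    next
      case 2 thus ?thesis unfolding hbw_edges_iff' by (intro disjI1 exI[of _ "2*q+1"]) auto
    qed
  qed
  show "pmon ?T (lowM j a \<union> highM j b n)"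
    unfolding pmon_def
  proof (intro conjI ballI)
    fix e assume "e \<in> lowM j a \<union> highM j b n"
    thus "e \<subseteq> ?T" unfolding lowM_def highM_def by auto
  next
    fix v assume "v \<in> ?T"
    then obtain p where v: "v = (j,p)" and p: "p < a \<or> (b < p \<and> p \<le> 2 * n)" by blast
    show "\<exists>!e. e \<in> lowM j a \<union> highM j b n \<and> v \<in> e"
    proof (cases "p < a")
      case True
      define q where "q = p div 2"
      have q1: "2*q+1 < a" using True ea unfolding q_def by presburger
      have pin: "p = 2*q \<or> p = 2*q+1" unfolding q_def by presburger
      show ?thesis
      proof
        show "{(j, 2*q), (j, 2*q+1)} \<in> lowM j a \<union> highM j b n \<and> v \<in> {(j, 2*q), (j, 2*q+1)}"
          unfolding lowM_def using q1 pin v by auto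
      next
        fix e assume e: "e \<in> lowM j a \<union> highM j b n \<and> v \<in> e"
        then consider q' where "e = {(j, 2*q'), (j, 2*q'+1)}" "2*q'+1 < a"
          | q' where "e = {(j, 2*q'+1), (j, 2*q'+2)}" "b \<le> 2*q'" "2*q'+2 \<le> 2*n"
          unfolding lowM_def highM_def by blast
        thus "e = {(j, 2*q), (j, 2*q+1)}"
        proof cases
          case 1
          hence "p = 2*q' \<or> p = 2*q'+1" using e v by auto
          hence "q' = q" using pin by presburger
          thus ?thesis using 1 by simp
        next
          case 2
          hence "p = 2*q'+1 \<or> p = 2*q'+2" using e v by auto
          thus ?thesis using 2 True ab by auto
        qed
      qed
    next
      case False
      hence pb: "b < p" "p \<le> 2 * n" using p by auto
      define q where "q = (p - 1) div 2"
      have pin: "p = 2*q+1 \<or> p = 2*q+2" unfolding q_def using pb by presburger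
      have qb: "b \<le> 2*q" using pb eb unfolding q_def by presburger
      have qn: "2*q+2 \<le> 2*n" using pb pin by presburger
      show ?thesis
      proof
        show "{(j, 2*q+1), (j, 2*q+2)} \<in> lowM j a \<union> highM j b n \<and> v \<in> {(j, 2*q+1), (j, 2*q+2)}"
          unfolding highM_def using qb qn pin v by auto
      next
        fix e assume e: "e \<in> lowM j a \<union> highM j b n \<and> v \<in> e"
        then consider q' where "e = {(j, 2*q'), (j, 2*q'+1)}" "2*q'+1 < a"
          | q' where "e = {(j, 2*q'+1), (j, 2*q'+2)}" "b \<le> 2*q'" "2*q'+2 \<le> 2*n"
          unfolding lowM_def highM_def by blast
        thus "e = {(j, 2*q+1), (j, 2*q+2)}"
        proof cases
          case 1
          hence "p = 2*q' \<or> p = 2*q'+1" using e v by auto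
          thus ?thesis using 1 pb ab by auto
        next
          case 2
          hence "p = 2*q'+1 \<or> p = 2*q'+2" using e v by auto
          hence "q' = q" using pin by presburger
          thus ?thesis using 2 by simp
        qed
      qed
    qed
  qed
qed

definition hm :: "nat \<Rightarrow> nat \<Rightarrow> nat \<Rightarrow> (nat \<times> nat) set set" where
  "hm j n d = lowM j (2*d) \<union> highM j (2*d) n \<union> {{(j, 2*n+1), (j, 2*d)}}"

lemma HM:
  assumes d: "d \<le> n"
  shows "pmon {(j,p) | p. p \<le> 2 * n + 1} (hm j n d)" and "hm j n d \<subseteq> hbw_edges j n"
proof -
  have b: "even (2*d)" "2*d \<le> 2*d" "2*d \<le> 2*n" using d by auto
  have p1: "pmon {(j,p) | p. p < 2*d \<or> (2*d < p \<and> p \<le> 2 * n)} (lowM j (2*d) \<union> highM j (2*d) n)"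
    using BL(1)[OF b(1) b(1) b(2) b(3)] .
  have p2: "pmon {(j, 2*n+1), (j, 2*d)} {{(j, 2*n+1), (j, 2*d)}}" unfolding pmon_def by auto
  have "pmon ({(j,p) | p. p < 2*d \<or> (2*d < p \<and> p \<le> 2 * n)} \<union> {(j, 2*n+1), (j, 2*d)})
          ((lowM j (2*d) \<union> highM j (2*d) n) \<union> {{(j, 2*n+1), (j, 2*d)}})"
    by (rule pmon_Un[OF p1 p2]) (use b(3) in auto)
  moreover have "{(j,p) | p. p < 2*d \<or> (2*d < p \<and> p \<le> 2 * n)} \<union> {(j, 2*n+1), (j, 2*d)} = {(j,p) | p. p \<le> 2 * n + 1}"
  proof
    show "{(j,p) | p. p \<le> 2 * n + 1} \<subseteq> {(j,p) | p. p < 2*d \<or> (2*d < p \<and> p \<le> 2 * n)} \<union> {(j, 2*n+1), (j, 2*d)}"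
      using b(3) by auto
  next
    show "{(j,p) | p. p < 2*d \<or> (2*d < p \<and> p \<le> 2 * n)} \<union> {(j, 2*n+1), (j, 2*d)} \<subseteq> {(j,p) | p. p \<le> 2 * n + 1}"
      using b(3) by force
  qed
  ultimately show "pmon {(j,p) | p. p \<le> 2 * n + 1} (hm j n d)" unfolding hm_def by simp
  show "hm j n d \<subseteq> hbw_edges j n"
  proof -
    have "{(j, 2*n+1), (j, 2*d)} \<in> hbw_edges j n" unfolding hbw_edges_def using d by auto
    thus ?thesis unfolding hm_def using BL(2)[OF b(1) b(1) b(2) b(3)] by auto
  qed
qed

lemma hm_cover:
  assumes e: "e \<in> hbw_edges j n"
  shows "\<exists>d \<le> n. e \<in> hm j n d"
proof -
  have "(\<exists>p < 2 * n. e = {(j,p), (j, Suc p)}) \<or> (\<exists>q \<le> n. e = {(j, 2*n+1), (j, 2*q)})"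
    using e unfolding hbw_edges_iff' .
  thus ?thesis
  proof
    assume "\<exists>p < 2 * n. e = {(j,p), (j, Suc p)}"
    then obtain p where p: "p < 2 * n" "e = {(j,p), (j, Suc p)}" by blast
    show ?thesis
    proof (cases "even p")
      case True
      then obtain q where q: "p = 2 * q" by blast
      have "e \<in> lowM j (2*n)" unfolding lowM_def using p q by auto
      thus ?thesis unfolding hm_def by auto
    next
      case False
      then obtain q where q: "p = 2 * q + 1" using oddE by blast
      have "e \<in> highM j (2*0) n" unfolding highM_def using p q by auto
      thus ?thesis unfolding hm_def by (intro exI[of _ 0]) auto
    qed
  next
    assume "\<exists>q \<le> n. e = {(j, 2*n+1), (j, 2*q)}"
    then obtain q where "q \<le> n" "e = {(j, 2*n+1), (j, 2*q)}" by blast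
    thus ?thesis unfolding hm_def by auto
  qed
qed



lemma del_empty': "del_vertices_edges E {} = E"
  unfolding del_vertices_edges_def by auto

context prism
begin

definition bk :: "nat \<Rightarrow> (nat \<times> nat) set" where "bk j = {v \<in> PV. fst v = j}"

lemma bk_eq: "j < k \<Longrightarrow> bk j = {(j,p) | p. p \<le> 2 * m j + 1}"
  unfolding bk_def by (auto simp: PV_iff)

lemma bk_disj: "i \<noteq> j \<Longrightarrow> bk i \<inter> bk j = {}" unfolding bk_def by auto

lemma UN_bk: "(\<Union>i<k. bk i) = PV" unfolding bk_def by (auto simp: PV_iff)

lemma hbw_PE: "j < k \<Longrightarrow> hbw_edges j (m j) \<subseteq> PE" using PE_iff by blast

lemma assemble:
  assumes "\<And>i. i < k \<Longrightarrow> pmon (T i) (M i) \<and> M i \<subseteq> hbw_edges i (m i) \<and> T i \<subseteq> bk i"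
  shows "pmon (\<Union>i<k. T i) (\<Union>i<k. M i) \<and> (\<Union>i<k. M i) \<subseteq> PE"
proof
  show "pmon (\<Union>i<k. T i) (\<Union>i<k. M i)"
  proof (rule pmon_UN)
    fix i assume "i \<in> {..<k}" thus "pmon (T i) (M i)" using assms by auto
  next
    fix i i' assume "i \<in> {..<k}" "i' \<in> {..<k}" "i \<noteq> i'"
    thus "T i \<inter> T i' = {}" using assms[of i] assms[of i'] bk_disj[of i i'] by blast
  qed
  show "(\<Union>i<k. M i) \<subseteq> PE" using assms hbw_PE by blast
qed

lemma pm_of_pmon: "pmon (PV - X) M \<Longrightarrow> M \<subseteq> PE \<Longrightarrow> perfect_matching (PV - X) (del_vertices_edges PE X) M"
  unfolding pmon_def perfect_matching_def del_vertices_edges_def by blast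

lemma ecut_fcut_disj: "c < k \<Longrightarrow> ecut c \<inter> fcut c = {}"
  unfolding ecut_def fcut_def using nx_ne[of c]
  by (cases "h c"; cases "ori c"; cases "h (nx c)"; cases "ori (nx c)") (auto simp: lab_simps)

lemma cut_block_int:
  assumes c: "c < k" and i: "i = c \<or> i = nx c"
  shows "\<exists>\<kappa>. (\<kappa> = 0 \<or> \<kappa> = 2 * m i) \<and> bk i \<inter> (ecut c \<union> fcut c) = {hub i, (i,\<kappa>)}"
proof -
  have ik: "i < k" using i c nx_less by auto
  have sub: "ecut c \<union> fcut c \<subseteq> PV" using ecut_sub fcut_sub c by auto
  have nc: "nx c \<noteq> c" using nx_ne[OF c] .
  show ?thesis using i
  proof
    assume ic: "i = c"
    have "bk i \<inter> (ecut c \<union> fcut c) = {lab_x m h ori c, lab_y m h ori c}"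
      unfolding bk_def ecut_def fcut_def using ic nc lab_in_PV[OF c] by auto
    thus ?thesis using ic by (cases "h c"; cases "ori c") (auto simp: lab_simps hub_def)
  next
    assume ic: "i = nx c"
    have "bk i \<inter> (ecut c \<union> fcut c) = {lab_w m h ori (nx c), lab_z m h ori (nx c)}"
      unfolding bk_def ecut_def fcut_def using ic nc lab_in_PV[OF nx_less] by auto
    thus ?thesis using ic by (cases "h (nx c)"; cases "ori (nx c)") (auto simp: lab_simps hub_def)
  qed
qed

lemma EX_full: "i < k \<Longrightarrow> d \<le> m i \<Longrightarrow> pmon (bk i) (hm i (m i) d) \<and> hm i (m i) d \<subseteq> hbw_edges i (m i)"
  using HM[of d "m i" i] bk_eq by simp

lemma EX_minus:
  assumes i: "i < k" and kp: "\<kappa> = 0 \<or> \<kappa> = 2 * m i"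
  shows "\<exists>M. pmon (bk i - {hub i, (i,\<kappa>)}) M \<and> M \<subseteq> hbw_edges i (m i)"
proof -
  have b: "even \<kappa>" "\<kappa> \<le> \<kappa>" "\<kappa> \<le> 2 * m i" using kp by auto
  have "bk i - {hub i, (i,\<kappa>)} = {(i,p) | p. p < \<kappa> \<or> (\<kappa> < p \<and> p \<le> 2 * m i)}"
    using bk_eq[OF i] b(3) by (auto simp: hub_def)
  thus ?thesis using BL[OF b(1) b(1) b(2) b(3), of i] by auto
qed

lemma matching_cover:
  assumes e: "e \<in> PE"
  shows "\<exists>M. perfect_matching PV PE M \<and> e \<in> M"
proof -
  have "(\<exists>j<k. e \<in> hbw_edges j (m j)) \<or> iscut e" using e unfolding PE_iff iscut_def by blast
  thus ?thesis
  proof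
    assume "\<exists>j<k. e \<in> hbw_edges j (m j)"
    then obtain j where j: "j < k" "e \<in> hbw_edges j (m j)" by blast
    obtain d where d: "d \<le> m j" "e \<in> hm j (m j) d" using hm_cover[OF j(2)] by blast
    define M where "M = (\<lambda>i. if i = j then hm j (m j) d else hm i (m i) (m i))"
    have "\<And>i. i < k \<Longrightarrow> pmon (bk i) (M i) \<and> M i \<subseteq> hbw_edges i (m i) \<and> bk i \<subseteq> bk i"
      unfolding M_def using EX_full d by auto
    from assemble[OF this] have "pmon PV (\<Union>i<k. M i)" "(\<Union>i<k. M i) \<subseteq> PE" using UN_bk by auto
    hence "perfect_matching PV PE (\<Union>i<k. M i)"
      using pm_of_pmon[of "{}"] by (simp add: del_empty')
    moreover have "e \<in> (\<Union>i<k. M i)" using j d unfolding M_def by auto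
    ultimately show ?thesis by blast
  next
    assume "iscut e"
    then obtain c where c: "c < k" "e = ecut c \<or> e = fcut c" unfolding iscut_def by blast
    let ?X = "ecut c \<union> fcut c"
    have "\<And>i. i < k \<Longrightarrow> \<exists>M. pmon (bk i - ?X) M \<and> M \<subseteq> hbw_edges i (m i)"
    proof -
      fix i assume i: "i < k"
      show "\<exists>M. pmon (bk i - ?X) M \<and> M \<subseteq> hbw_edges i (m i)"
      proof (cases "i = c \<or> i = nx c")
        case True
        then obtain \<kappa> where kp: "\<kappa> = 0 \<or> \<kappa> = 2 * m i" "bk i \<inter> ?X = {hub i, (i,\<kappa>)}"
          using cut_block_int[OF c(1)] by blast
        have "bk i - ?X = bk i - {hub i, (i,\<kappa>)}" using kp(2) by blast
        thus ?thesis using EX_minus[OF i kp(1)] by simp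
      next
        case False
        have "bk i \<inter> ?X = {}" using cut_vertex[OF c(1)] False unfolding bk_def by auto
        hence "bk i - ?X = bk i" by blast
        thus ?thesis using EX_full[OF i, of "m i"] by auto
      qed
    qed
    then obtain Mf where Mf: "\<And>i. i < k \<Longrightarrow> pmon (bk i - ?X) (Mf i) \<and> Mf i \<subseteq> hbw_edges i (m i)"
      by metis
    have "\<And>i. i < k \<Longrightarrow> pmon (bk i - ?X) (Mf i) \<and> Mf i \<subseteq> hbw_edges i (m i) \<and> bk i - ?X \<subseteq> bk i"
      using Mf by auto
    from assemble[OF this] have A: "pmon (\<Union>i<k. bk i - ?X) (\<Union>i<k. Mf i)" "(\<Union>i<k. Mf i) \<subseteq> PE" by auto
    have "(\<Union>i<k. bk i - ?X) = PV - ?X" using UN_bk by blast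
    hence A1: "pmon (PV - ?X) (\<Union>i<k. Mf i)" using A(1) by simp
    have A2: "pmon ?X {ecut c, fcut c}" unfolding pmon_def using ecut_fcut_disj[OF c(1)] by blast
    have "pmon ((PV - ?X) \<union> ?X) ((\<Union>i<k. Mf i) \<union> {ecut c, fcut c})"
      by (rule pmon_Un[OF A1 A2]) blast
    moreover have "(PV - ?X) \<union> ?X = PV" using ecut_sub fcut_sub c(1) by blast
    moreover have "{ecut c, fcut c} \<subseteq> PE" using c(1) PE_iff by blast
    ultimately have "perfect_matching PV PE ((\<Union>i<k. Mf i) \<union> {ecut c, fcut c})"
      using A(2) pm_of_pmon[of "{}"] by (simp add: del_empty')
    thus ?thesis using c(2) by blast
  qed
qed

end



context prism_cyc
begin

lemma EX_cyc: assumes j: "j < k" shows "\<exists>M. pmon (bk j - S) M \<and> M \<subseteq> hbw_edges j (m j)"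
proof (cases "hub j \<in> S")
  case False
  have "\<forall>p \<le> 2 * m j. (j, p) \<notin> S" using B1[OF j False] .
  hence "bk j - S = bk j" using False bk_eq[OF j] by (auto simp: hub_def le_Suc_eq)
  thus ?thesis using EX_full[OF j, of "m j"] by auto
next
  case True
  let ?Q = "{p. p \<le> 2 * m j \<and> (j,p) \<in> S}"
  have fQ: "finite ?Q" by simp
  have neQ: "?Q \<noteq> {}" using B2[OF j True] by auto
  define a where "a = Min ?Q"
  define b where "b = Max ?Q"
  have aQ: "a \<in> ?Q" unfolding a_def using Min_in[OF fQ neQ] .
  have bQ: "b \<in> ?Q" unfolding b_def using Max_in[OF fQ neQ] .
  have amin: "\<And>p. p \<in> ?Q \<Longrightarrow> a \<le> p" unfolding a_def using fQ by simp
  have bmax: "\<And>p. p \<in> ?Q \<Longrightarrow> p \<le> b" unfolding b_def using fQ by simp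
  have ea: "even a"
  proof (rule B3min[OF j])
    show "(j,a) \<in> S" "a \<le> 2 * m j" using aQ by auto
    show "\<forall>q<a. (j,q) \<notin> S"
    proof (intro allI impI)
      fix q assume q: "q < a"
      show "(j,q) \<notin> S"
      proof
        assume "(j,q) \<in> S"
        hence "q \<in> ?Q" using q aQ by auto
        thus False using amin q by fastforce
      qed
    qed
  qed
  have eb: "even b"
  proof (rule B3max[OF j])
    show "(j,b) \<in> S" "b \<le> 2 * m j" using bQ by auto
    show "\<forall>q. b < q \<and> q \<le> 2 * m j \<longrightarrow> (j,q) \<notin> S" using bmax by fastforce
  qed
  have ab: "a \<le> b" using amin bQ by blast
  have b2: "b \<le> 2 * m j" using bQ by simp
  have iv: "\<And>p. p \<le> 2 * m j \<Longrightarrow> (j,p) \<in> S \<longleftrightarrow> a \<le> p \<and> p \<le> b"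
  proof
    fix p assume "p \<le> 2 * m j" "(j,p) \<in> S"
    hence "p \<in> ?Q" by simp
    thus "a \<le> p \<and> p \<le> b" using amin bmax by blast
  next
    fix p assume p: "p \<le> 2 * m j" "a \<le> p \<and> p \<le> b"
    show "(j,p) \<in> S"
    proof (cases "p = a \<or> p = b")
      case True thus ?thesis using aQ bQ by auto
    next
      case False
      hence "a < p" "p < b" using p by auto
      thus ?thesis using B4[OF j True _ _ _ _ b2] aQ bQ by auto
    qed
  qed
  have "bk j - S = {(j,p) | p. p < a \<or> (b < p \<and> p \<le> 2 * m j)}"
  proof
    show "bk j - S \<subseteq> {(j,p) | p. p < a \<or> (b < p \<and> p \<le> 2 * m j)}"
    proof
      fix v assume v: "v \<in> bk j - S"
      then obtain p where vp: "v = (j,p)" "p \<le> 2 * m j + 1" using bk_eq[OF j] by auto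
      have "p \<noteq> 2 * m j + 1" using v vp True by (auto simp: hub_def)
      hence "p \<le> 2 * m j" using vp by simp
      thus "v \<in> {(j,p) | p. p < a \<or> (b < p \<and> p \<le> 2 * m j)}" using iv[of p] v vp by auto
    qed
  next
    show "{(j,p) | p. p < a \<or> (b < p \<and> p \<le> 2 * m j)} \<subseteq> bk j - S"
    proof
      fix v assume "v \<in> {(j,p) | p. p < a \<or> (b < p \<and> p \<le> 2 * m j)}"
      then obtain p where vp: "v = (j,p)" "p < a \<or> (b < p \<and> p \<le> 2 * m j)" by blast
      have p2: "p \<le> 2 * m j" using vp(2) ab b2 by auto
      have "(j,p) \<notin> S" using iv[OF p2] vp(2) by auto
      thus "v \<in> bk j - S" using vp p2 bk_eq[OF j] by auto
    qed
  qed
  thus ?thesis using BL[OF ea eb ab b2, of j] by auto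
qed

lemma cycle_pm: "\<exists>M. perfect_matching (PV - S) (del_vertices_edges PE S) M"
proof -
  obtain Mf where Mf: "\<And>i. i < k \<Longrightarrow> pmon (bk i - S) (Mf i) \<and> Mf i \<subseteq> hbw_edges i (m i)"
    using EX_cyc by metis
  have "\<And>i. i < k \<Longrightarrow> pmon (bk i - S) (Mf i) \<and> Mf i \<subseteq> hbw_edges i (m i) \<and> bk i - S \<subseteq> bk i"
    using Mf by auto
  from assemble[OF this] have A: "pmon (\<Union>i<k. bk i - S) (\<Union>i<k. Mf i)" "(\<Union>i<k. Mf i) \<subseteq> PE" by auto
  have "(\<Union>i<k. bk i - S) = PV - S" using UN_bk by blast
  thus ?thesis using A pm_of_pmon by metis
qed

end

context prism
begin

lemma edge_pair: "e \<in> PE \<Longrightarrow> \<exists>a b. e = {a, b} \<and> a \<noteq> b \<and> a \<in> PV \<and> b \<in> PV"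
proof -
  assume e: "e \<in> PE"
  have "(\<exists>j<k. e \<in> hbw_edges j (m j)) \<or> iscut e" using e unfolding PE_iff iscut_def by blast
  thus ?thesis
  proof
    assume "\<exists>j<k. e \<in> hbw_edges j (m j)"
    then obtain j where j: "j < k" "e \<in> hbw_edges j (m j)" by blast
    have "(\<exists>p < 2 * m j. e = {(j,p), (j, Suc p)}) \<or> (\<exists>q \<le> m j. e = {(j, 2*m j+1), (j, 2*q)})"
      using j(2) unfolding hbw_edges_iff .
    thus ?thesis
    proof
      assume "\<exists>p < 2 * m j. e = {(j,p), (j, Suc p)}"
      then obtain p where p: "p < 2 * m j" "e = {(j,p), (j, Suc p)}" by blast
      show ?thesis using p j by (intro exI[of _ "(j,p)"] exI[of _ "(j,Suc p)"]) (simp add: PV_iff)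
    next
      assume "\<exists>q \<le> m j. e = {(j, 2*m j+1), (j, 2*q)}"
      then obtain q where q: "q \<le> m j" "e = {(j, 2*m j+1), (j, 2*q)}" by blast
      show ?thesis using q j by (intro exI[of _ "(j, 2*m j+1)"] exI[of _ "(j,2*q)"]) (simp add: PV_iff)
    qed
  next
    assume "iscut e"
    then obtain c where c: "c < k" "e = ecut c \<or> e = fcut c" unfolding iscut_def by blast
    have nc: "nx c \<noteq> c" using nx_ne[OF c(1)] .
    show ?thesis using c(2)
    proof
      assume "e = ecut c"
      thus ?thesis unfolding ecut_def using lab_in_PV c(1) nx_less nc
        by (intro exI[of _ "lab_x m h ori c"] exI[of _ "lab_w m h ori (nx c)"]) (auto dest: arg_cong[of _ _ fst])
    next
      assume "e = fcut c"
      thus ?thesis unfolding fcut_def using lab_in_PV c(1) nx_less nc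
        by (intro exI[of _ "lab_y m h ori c"] exI[of _ "lab_z m h ori (nx c)"]) (auto dest: arg_cong[of _ _ fst])
    qed
  qed
qed

lemma fin_PV': "finite PV" unfolding prism_verts_def hbw_verts_def by auto

lemma sg: "simple_graph PV PE"
  unfolding simple_graph_def using fin_PV' edge_pair by blast

abbreviation "RR \<equiv> (\<lambda>a b. {a, b} \<in> PE)\<^sup>*\<^sup>*"

lemma RR_sym: "RR a b \<Longrightarrow> RR b a"
proof (induction rule: rtranclp_induct)
  case base thus ?case by simp
next
  case (step y z)
  have "{z, y} \<in> PE" using step(2) by (simp add: insert_commute)
  thus ?case using step(3) by (rule converse_rtranclp_into_rtranclp)
qed

lemma RR_edge: "{a, b} \<in> PE \<Longrightarrow> RR a b" by (rule r_into_rtranclp)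

lemma RR_block: assumes j: "j < k" and v: "v \<in> bk j" shows "RR (hub j) v"
proof -
  obtain p where vp: "v = (j,p)" "p \<le> 2 * m j + 1" using v bk_eq[OF j] by auto
  have ev: "\<And>q. q \<le> m j \<Longrightarrow> RR (hub j) (j, 2*q)"
  proof -
    fix q assume "q \<le> m j"
    hence "{hub j, (j, 2*q)} \<in> hbw_edges j (m j)" unfolding hbw_edges_def hub_def by auto
    thus "RR (hub j) (j, 2*q)" using hbw_PE[OF j] RR_edge by blast
  qed
  show ?thesis
  proof (cases "p = 2 * m j + 1")
    case True thus ?thesis using vp by (simp add: hub_def)
  next
    case False
    hence p2: "p \<le> 2 * m j" using vp by simp
    show ?thesis
    proof (cases "even p")
      case True
      then obtain q where "p = 2 * q" by blast
      thus ?thesis using ev[of q] p2 vp by simp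
    next
      case False
      then obtain q where q: "p = 2 * q + 1" using oddE by blast
      have A: "RR (hub j) (j, 2*q)" using ev[of q] q p2 by simp
      have "{(j, 2*q), (j, Suc (2*q))} \<in> hbw_edges j (m j)" using q p2 unfolding hbw_edges_def by auto
      hence B: "RR (j, 2*q) (j, 2*q+1)" using hbw_PE[OF j] RR_edge by auto
      show ?thesis using rtranclp_trans[OF A B] vp q by simp
    qed
  qed
qed

lemma hub_chain: "j < k \<Longrightarrow> RR (hub 0) (hub j)"
proof (induction j)
  case 0 thus ?case by simp
next
  case (Suc j)
  have j: "j < k" using Suc.prems by simp
  have nxj: "nx j = Suc j" unfolding nx_def using Suc.prems by simp
  have "lab_x m h ori j \<in> bk j" unfolding bk_def using lab_in_PV[OF j] by simp
  hence r1: "RR (hub j) (lab_x m h ori j)" using RR_block[OF j] by blast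
  have "ecut j \<in> PE" using j PE_iff by blast
  hence r2: "RR (lab_x m h ori j) (lab_w m h ori (Suc j))" using RR_edge nxj unfolding ecut_def by simp
  have "lab_w m h ori (Suc j) \<in> bk (Suc j)" unfolding bk_def using lab_in_PV[OF Suc.prems] by simp
  hence r3: "RR (lab_w m h ori (Suc j)) (hub (Suc j))" using RR_block[OF Suc.prems] RR_sym by blast
  show ?case using rtranclp_trans[OF rtranclp_trans[OF rtranclp_trans[OF Suc.IH[OF j] r1] r2] r3] .
qed

lemma connected: "graph_connected PV PE"
  unfolding graph_connected_def
proof (intro ballI)
  fix u v assume u: "u \<in> PV" and v: "v \<in> PV"
  have fu: "fst u < k" and fv: "fst v < k" using u v by (auto simp: PV_iff)
  have r1: "RR u (hub (fst u))" using RR_block[OF fu] RR_sym u unfolding bk_def by blast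
  have r2: "RR (hub (fst u)) (hub 0)" using hub_chain[OF fu] RR_sym by blast
  have r3: "RR (hub 0) (hub (fst v))" using hub_chain[OF fv] .
  have r4: "RR (hub (fst v)) v" using RR_block[OF fv] v unfolding bk_def by blast
  show "RR u v" using rtranclp_trans[OF rtranclp_trans[OF rtranclp_trans[OF r1 r2] r3] r4] .
qed

lemma card_PV: "card PV \<ge> 2"
proof -
  have "{(0,0), (0,1)} \<subseteq> PV" using k3 by (auto simp: PV_iff)
  hence "card {(0::nat,0::nat), (0,1)} \<le> card PV" using fin_PV' by (rule card_mono[rotated])
  thus ?thesis by simp
qed

lemma prism_ce: assumes oddk: "odd k" shows "cycle_extendable PV PE"
  unfolding cycle_extendable_def matching_covered_def
proof (intro conjI allI impI ballI)
  show "simple_graph PV PE" by (rule sg)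
  show "graph_connected PV PE" by (rule connected)
  show "card PV \<ge> 2" by (rule card_PV)
  fix e assume "e \<in> PE" thus "\<exists>M. perfect_matching PV PE M \<and> e \<in> M" by (rule matching_cover)
next
  fix cs assume a: "is_cycle PE cs \<and> even (length cs)"
  interpret C: prism_cyc k m h ori cs
    using a oddk by unfold_locales auto
  show "\<exists>M. perfect_matching (PV - set cs) (del_vertices_edges PE (set cs)) M" by (rule C.cycle_pm)
qed

end



theorem proposition5p5:
  fixes V :: "'a set" and E :: "'a set set"
  assumes "in_G0 V E"
  shows "cycle_extendable V E"
proof -
  obtain k m h ori f where k: "odd k" "k \<ge> 3" and bij: "bij_betw f (prism_verts k m) V"
    and E: "E = (\<lambda>e. f ` e) ` prism_edges k m h ori"
    using assms unfolding in_G0_def by blast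
  interpret P: prism k m h ori using k by unfold_locales
  have sub: "\<forall>e\<in>prism_edges k m h ori. e \<subseteq> prism_verts k m" using P.PE_sub by blast
  show ?thesis by (rule transport[OF bij E sub P.prism_ce[OF k(1)]])
qed

end
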